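(* Let $\mathfrak g=\mathfrak{gl}(1|2)$, let $\zeta\in\mathcal I$ with $a:=\zeta(E_{23})\neq0$, and let $\lambda\in\mathfrak h^*$ be atypical with $c:=\chi^{\bar0}_\lambda(z)$. Let $\underline\lambda\in W\cdot\lambda$ be antidominant and let $\alpha$ be the unique positive odd root with $(\underline\lambda+\rho,\alpha)=0$ and $\underline\lambda-\alpha$ antidominant. Let $v$ be a nonzero vector of $M(\lambda,\zeta)\subset\widetilde M(\lambda,\zeta)$ with $E_{23}v=av$, and set $v_2:=E_{21}v$, $v_4:=2aE_{31}v+E_{21}H_0v$, and $$w:=v_2+\frac{1}{2(1-c)}v_4\ \text{ if }c\ne1,\qquad w:=v_4\ \text{ if }c=1.$$ Then there is a short exact sequence $0\to U(\mathfrak g)w\to\widetilde M(\lambda,\zeta)\to\widetilde L(\lambda,\zeta)\to0$, where $U(\mathfrak g)w\cong\widetilde L(\underline\lambda-\alpha,\zeta)$ and the quotient $\widetilde M(\lambda,\zeta)/U(\mathfrak g)w\cong\widetilde L(\lambda,\zeta)$ is generated by the image of $v$.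
   Context: $\mathfrak{gl}(1|2)$: $3\times3$ complex matrices, index $1$ even and indices $2,3$ odd, super commutator; $E_{ij}$ matrix units. $\mathfrak g_0=\operatorname{span}\{E_{11},E_{22},E_{23},E_{32},E_{33}\}$, $\mathfrak g_1=\operatorname{span}\{E_{12},E_{13}\}$, $\mathfrak g_{-1}=\operatorname{span}\{E_{21},E_{31}\}$. $\mathfrak h$ = diagonal matrices, dual basis $\varepsilon_i$; $\mathfrak n$ = strictly upper triangular matrices, $\mathfrak n_{\bar0}=\mathbb CE_{23}$; $\mathcal I=\{\zeta\in\mathfrak n^*\mid\zeta(\mathfrak n_{\bar1})=0\}$. Positive odd roots $\varepsilon_1-\varepsilon_2,\varepsilon_1-\varepsilon_3$; $\rho=-\varepsilon_1+\varepsilon_2$, $\rho_{\bar0}=\tfrac12(\varepsilon_2-\varepsilon_3)$. Form: $(\varepsilon_1,\varepsilon_1)=1$, $(\varepsilon_2,\varepsilon_2)=(\varepsilon_3,\varepsilon_3)=-1$, others $0$; $\lambda$ atypical iff $(\lambda+\rho,\beta)=0$ for some odd root $\beta$. $W=\{1,s\}$, $s$ swapping $\varepsilon_2,\varepsilon_3$, dot action $w\cdot\lambda=w(\lambda+\rho_{\bar0})-\rho_{\bar0}$; $\lambda$ antidominant iff $\lambda_2-\lambda_3+1\notin\mathbb Z_{>0}$. $H_0:=E_{22}-E_{33}$, $z:=E_{11}+\tfrac12(E_{22}+E_{33})$; $\chi^{\bar0}_\lambda$ is the central character of $U(\mathfrak g_0)$ of the $\mathfrak g_0$-Verma module of highest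 weight $\lambda$. For each $\mu\in\mathfrak h^*$: $M(\mu,\zeta):=U(\mathfrak g_0)/\operatorname{Ker}(\chi^{\bar0}_\mu)U(\mathfrak g_0)\otimes_{U(\mathbb CE_{23})}\mathbb C_\zeta$, $\widetilde M(\mu,\zeta):=U(\mathfrak g)\otimes_{U(\mathfrak g_0\oplus\mathfrak g_1)}M(\mu,\zeta)$ with $\mathfrak g_1$ acting by zero, and $\widetilde L(\mu,\zeta)$ is its unique simple quotient. *)

theory Defs
  imports Complex_Main "HOL-Library.Function_Algebras"
begin

class cvs = ab_group_add +
  fixes cscale :: "complex \<Rightarrow> 'a \<Rightarrow> 'a" (infixr "*\<^sub>C" 75)
  assumes cscale_add_right: "a *\<^sub>C (x + y) = a *\<^sub>C x + a *\<^sub>C y"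
    and cscale_add_left: "(a + b) *\<^sub>C x = a *\<^sub>C x + b *\<^sub>C x"
    and cscale_cscale: "a *\<^sub>C (b *\<^sub>C x) = (a * b) *\<^sub>C x"
    and cscale_one: "1 *\<^sub>C x = x"

datatype idx = I1 | I2 | I3

fun par :: "idx \<Rightarrow> nat" where
  "par I1 = 0" | "par I2 = 1" | "par I3 = 1"

text \<open>Sign (-1)^(|E_ij| |E_kl|) in the super commutator of matrix units.\<close>
definition ssign :: "idx \<Rightarrow> idx \<Rightarrow> idx \<Rightarrow> idx \<Rightarrow> complex" where
  "ssign i j k l = (-1) ^ ((par i + par j) * (par k + par l))"

text \<open>A (left) U(gl(1|2))-module with carrier a subspace S of a complex vector space:
  act i j is the action of the matrix unit E_ij, and the super commutator relations
  [E_ij,E_kl] = delta_jk E_il - (-1)^(|E_ij||E_kl|) delta_li E_kj hold.\<close>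
definition subspace_c :: "'v::cvs set \<Rightarrow> bool" where
  "subspace_c N \<longleftrightarrow> 0 \<in> N \<and> (\<forall>x\<in>N. \<forall>y\<in>N. x + y \<in> N) \<and> (\<forall>c. \<forall>x\<in>N. c *\<^sub>C x \<in> N)"

definition is_rep :: "'v::cvs set \<Rightarrow> (idx \<Rightarrow> idx \<Rightarrow> 'v \<Rightarrow> 'v) \<Rightarrow> bool" where
  "is_rep S act \<longleftrightarrow> subspace_c S \<and>
     (\<forall>i j. \<forall>x\<in>S. act i j x \<in> S) \<and>
     (\<forall>i j. \<forall>x\<in>S. \<forall>y\<in>S. act i j (x + y) = act i j x + act i j y) \<and>
     (\<forall>i j c. \<forall>x\<in>S. act i j (c *\<^sub>C x) = c *\<^sub>C act i j x) \<and>
     (\<forall>i j k l. \<forall>x\<in>S.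
        act i j (act k l x) - ssign i j k l *\<^sub>C act k l (act i j x) =
        (if j = k then act i l x else 0) - ssign i j k l *\<^sub>C (if l = i then act k j x else 0))"

definition submodule :: "'v::cvs set \<Rightarrow> (idx \<Rightarrow> idx \<Rightarrow> 'v \<Rightarrow> 'v) \<Rightarrow> 'v set \<Rightarrow> bool" where
  "submodule S act N \<longleftrightarrow> N \<subseteq> S \<and> subspace_c N \<and> (\<forall>i j. \<forall>x\<in>N. act i j x \<in> N)"

definition gen :: "'v::cvs set \<Rightarrow> (idx \<Rightarrow> idx \<Rightarrow> 'v \<Rightarrow> 'v) \<Rightarrow> 'v set \<Rightarrow> 'v set" where
  "gen S act X = \<Inter>{N. submodule S act N \<and> X \<subseteq> N}"

definition in_g0 :: "idx \<Rightarrow> idx \<Rightarrow> bool" where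
  "in_g0 i j \<longleftrightarrow> (i = I1 \<and> j = I1) \<or> (i \<noteq> I1 \<and> j \<noteq> I1)"

definition gen0 :: "'v::cvs set \<Rightarrow> (idx \<Rightarrow> idx \<Rightarrow> 'v \<Rightarrow> 'v) \<Rightarrow> 'v set \<Rightarrow> 'v set" where
  "gen0 S act X = \<Inter>{N. N \<subseteq> S \<and> subspace_c N \<and> (\<forall>i j. in_g0 i j \<longrightarrow> (\<forall>x\<in>N. act i j x \<in> N)) \<and> X \<subseteq> N}"

definition simple_mod :: "'v::cvs set \<Rightarrow> (idx \<Rightarrow> idx \<Rightarrow> 'v \<Rightarrow> 'v) \<Rightarrow> 'v set \<Rightarrow> bool" where
  "simple_mod S act N \<longleftrightarrow> submodule S act N \<and> N \<noteq> {0} \<and>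
     (\<forall>N'. submodule S act N' \<and> N' \<subseteq> N \<longrightarrow> N' = {0} \<or> N' = N)"

definition hom :: "'v::cvs set \<Rightarrow> (idx \<Rightarrow> idx \<Rightarrow> 'v \<Rightarrow> 'v) \<Rightarrow> 'w::cvs set \<Rightarrow> (idx \<Rightarrow> idx \<Rightarrow> 'w \<Rightarrow> 'w) \<Rightarrow> ('v \<Rightarrow> 'w) \<Rightarrow> bool" where
  "hom S act S' act' f \<longleftrightarrow> f ` S \<subseteq> S' \<and>
     (\<forall>x\<in>S. \<forall>y\<in>S. f (x + y) = f x + f y) \<and> (\<forall>c. \<forall>x\<in>S. f (c *\<^sub>C x) = c *\<^sub>C f x) \<and>
     (\<forall>i j. \<forall>x\<in>S. f (act i j x) = act' i j (f x))"

text \<open>Weights mu in h^*, written mu = mu(I1) eps_1 + mu(I2) eps_2 + mu(I3) eps_3.\<close>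
type_synonym weight = "idx \<Rightarrow> complex"

definition eps :: "idx \<Rightarrow> weight" where "eps i = (\<lambda>k. if k = i then 1 else 0)"

definition bform :: "weight \<Rightarrow> weight \<Rightarrow> complex" where
  "bform x y = x I1 * y I1 - x I2 * y I2 - x I3 * y I3"

definition rho :: weight where "rho = eps I2 - eps I1"
definition rho0 :: weight where "rho0 = (\<lambda>k. (eps I2 k - eps I3 k) / 2)"

definition odd_roots :: "weight set" where
  "odd_roots = {eps I1 - eps I2, eps I2 - eps I1, eps I1 - eps I3, eps I3 - eps I1}"
definition pos_odd_roots :: "weight set" where
  "pos_odd_roots = {eps I1 - eps I2, eps I1 - eps I3}"

definition atypical :: "weight \<Rightarrow> bool" where
  "atypical lam \<longleftrightarrow> (\<exists>\<beta>\<in>odd_roots. bform (lam + rho) \<beta> = 0)"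

text \<open>The simple reflection s swapping eps_2 and eps_3, and the dot action of W = {1,s}.\<close>
definition srefl :: "weight \<Rightarrow> weight" where
  "srefl x = (\<lambda>k. case k of I1 \<Rightarrow> x I1 | I2 \<Rightarrow> x I3 | I3 \<Rightarrow> x I2)"

definition W_orbit_dot :: "weight \<Rightarrow> weight set" where
  "W_orbit_dot lam = {lam, srefl (lam + rho0) - rho0}"

definition antidominant :: "weight \<Rightarrow> bool" where
  "antidominant lam \<longleftrightarrow> \<not> (\<exists>n::nat. n > 0 \<and> lam I2 - lam I3 + 1 = of_nat n)"

text \<open>chi^0_lam(z) for the central element z = E11 + (E22+E33)/2 of U(g_0): z is central,
  so it acts on the highest weight vector of the g_0-Verma module by lam(z).\<close>
definition chi0_z :: "weight \<Rightarrow> complex" where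
  "chi0_z lam = lam I1 + (lam I2 + lam I3) / 2"

text \<open>zeta \<in> n^*, recorded by its values on the matrix units E_12, E_13, E_23 spanning n;
  zeta \<in> I means zeta vanishes on n_1 = span{E12, E13}.\<close>
definition in_I :: "(idx \<Rightarrow> idx \<Rightarrow> complex) \<Rightarrow> bool" where
  "in_I zeta \<longleftrightarrow> zeta I1 I2 = 0 \<and> zeta I1 I3 = 0"

definition H0 :: "(idx \<Rightarrow> idx \<Rightarrow> 'v \<Rightarrow> 'v) \<Rightarrow> 'v::cvs \<Rightarrow> 'v" where
  "H0 act x = act I2 I2 x - act I3 I3 x"

text \<open>Relations satisfied by the generator 1 \<otimes> 1 of Mtilde(mu,zeta):
  g_1 acts by zero; E_23 acts by zeta(E_23) (the Whittaker condition for n_0 = C E_23);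
  Ker(chi^0_mu) U(g_0) annihilates it. The centre Z(U(g_0)) is the polynomial algebra on
  E11, E22+E33 and the gl(2)-Casimir Omega = H0^2 + 2 E23 E32 + 2 E32 E23, whose values
  under chi^0_mu are mu1, mu2+mu3 and (mu2-mu3)^2 + 2(mu2-mu3).\<close>
definition whitt_gen :: "weight \<Rightarrow> (idx \<Rightarrow> idx \<Rightarrow> complex) \<Rightarrow> (idx \<Rightarrow> idx \<Rightarrow> 'v \<Rightarrow> 'v) \<Rightarrow> 'v::cvs \<Rightarrow> bool" where
  "whitt_gen mu zeta act u \<longleftrightarrow>
     act I1 I2 u = 0 \<and> act I1 I3 u = 0 \<and>
     act I2 I3 u = zeta I2 I3 *\<^sub>C u \<and>
     act I1 I1 u = mu I1 *\<^sub>C u \<and>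
     act I2 I2 u + act I3 I3 u = (mu I2 + mu I3) *\<^sub>C u \<and>
     H0 act (H0 act u) + 2 *\<^sub>C act I2 I3 (act I3 I2 u) + 2 *\<^sub>C act I3 I2 (act I2 I3 u)
       = ((mu I2 - mu I3)^2 + 2 * (mu I2 - mu I3)) *\<^sub>C u"

text \<open>(S, act, v) is (a copy of) the induced module Mtilde(mu,zeta) with v = 1 \<otimes> 1:
  v satisfies the defining relations, generates S, and (S,v) has the universal property
  of the induced module (every module with such a vector receives a homomorphism sending
  v to that vector).\<close>
definition Mtilde_model :: "weight \<Rightarrow> (idx \<Rightarrow> idx \<Rightarrow> complex) \<Rightarrow> 'v::cvs set \<Rightarrow> (idx \<Rightarrow> idx \<Rightarrow> 'v \<Rightarrow> 'v) \<Rightarrow> 'v \<Rightarrow> bool" where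
  "Mtilde_model mu zeta S act v \<longleftrightarrow> is_rep S act \<and> v \<in> S \<and> whitt_gen mu zeta act v \<and>
     gen S act {v} = S \<and>
     (\<forall>(S'::'v set) act' u. is_rep S' act' \<and> u \<in> S' \<and> whitt_gen mu zeta act' u \<longrightarrow>
        (\<exists>f. hom S act S' act' f \<and> f v = u))"

text \<open>The submodule N of (S,act) is isomorphic to Ltilde(mu,zeta), the unique simple quotient
  of Mtilde(mu,zeta): N is simple, it is a quotient (homomorphic image) of every copy of
  Mtilde(mu,zeta), and it contains a nonzero image of the generator.\<close>
definition iso_Ltilde :: "weight \<Rightarrow> (idx \<Rightarrow> idx \<Rightarrow> complex) \<Rightarrow> 'v::cvs set \<Rightarrow> (idx \<Rightarrow> idx \<Rightarrow> 'v \<Rightarrow> 'v) \<Rightarrow> 'v set \<Rightarrow> bool" where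
  "iso_Ltilde mu zeta S act N \<longleftrightarrow> simple_mod S act N \<and>
     (\<exists>u\<in>N. u \<noteq> 0 \<and> whitt_gen mu zeta act u) \<and>
     (\<forall>(S'::'v set) act' v'. Mtilde_model mu zeta S' act' v' \<longrightarrow>
        (\<exists>f. hom S' act' N act f \<and> f ` S' = N))"

text \<open>The quotient S/N is simple (N is a maximal proper submodule).\<close>
definition maximal_submodule :: "'v::cvs set \<Rightarrow> (idx \<Rightarrow> idx \<Rightarrow> 'v \<Rightarrow> 'v) \<Rightarrow> 'v set \<Rightarrow> bool" where
  "maximal_submodule S act N \<longleftrightarrow> submodule S act N \<and> N \<noteq> S \<and>
     (\<forall>N'. submodule S act N' \<and> N \<subseteq> N' \<longrightarrow> N' = N \<or> N' = S)"

end

theory Submission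
  imports Defs "HOL-Computational_Algebra.Polynomial" "HOL-Library.Product_Plus"
begin

context cvs begin
lemma cscale_zero_left[simp]: "0 *\<^sub>C x = 0"
  using cscale_add_left[of 0 0 x] by simp
lemma cscale_zero_right[simp]: "c *\<^sub>C 0 = 0"
  using cscale_add_right[of c 0 0] by simp
lemma cscale_minus_right: "c *\<^sub>C (- x) = - (c *\<^sub>C x)"
proof -
  have "c *\<^sub>C (- x) + c *\<^sub>C x = c *\<^sub>C (- x + x)" by (simp only: cscale_add_right)
  then have "c *\<^sub>C (- x) + c *\<^sub>C x = 0" by simp
  then show ?thesis by (simp add: add_eq_0_iff2)
qed
lemma cscale_diff_right: "c *\<^sub>C (x - y) = c *\<^sub>C x - c *\<^sub>C y"
  by (simp only: diff_conv_add_uminus cscale_add_right cscale_minus_right)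
lemma cscale_minus_left: "(- c) *\<^sub>C x = - (c *\<^sub>C x)"
proof -
  have "(- c) *\<^sub>C x + c *\<^sub>C x = (- c + c) *\<^sub>C x" by (simp only: cscale_add_left)
  then have "(- c) *\<^sub>C x + c *\<^sub>C x = 0" by simp
  then show ?thesis by (simp add: add_eq_0_iff2)
qed
lemma cscale_diff_left: "(c - d) *\<^sub>C x = c *\<^sub>C x - d *\<^sub>C x"
proof -
  have "(c - d) *\<^sub>C x = (c + (- d)) *\<^sub>C x" by simp
  also have "\<dots> = c *\<^sub>C x - d *\<^sub>C x" by (simp only: cscale_add_left cscale_minus_left diff_conv_add_uminus)
  finally show ?thesis .
qed
lemma cscale_neg1[simp]: "(-1) *\<^sub>C x = - x"
  by (simp add: cscale_minus_left cscale_one)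
lemma cscale_cancel: assumes "c \<noteq> 0" "c *\<^sub>C x = 0" shows "x = 0"
proof -
  have "(1/c) *\<^sub>C (c *\<^sub>C x) = ((1/c)*c) *\<^sub>C x" by (rule cscale_cscale)
  also have "(1/c)*c = 1" using assms(1) by simp
  finally show ?thesis using assms(2) by (simp add: cscale_one)
qed
lemma cscale_inj: "c \<noteq> 0 \<Longrightarrow> c *\<^sub>C x = c *\<^sub>C y \<Longrightarrow> x = y"
  using cscale_cancel[of c "x - y"] by (simp add: cscale_diff_right)
end

lemma poly_ext:
  fixes p q :: "complex poly"
  assumes "\<And>x. poly p x = poly q x" shows "p = q"
proof -
  have "poly p = poly q" by (rule ext) (rule assms)
  then show ?thesis by (simp add: poly_eq_poly_eq_iff)
qed

lemma poly_ext_iff: "(p :: complex poly) = q \<longleftrightarrow> (\<forall>x. poly p x = poly q x)"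
  using poly_ext by auto

lemma periodic_const:
  fixes p :: "complex poly"
  assumes "pcompose p [:-2, 1:] = p"
  shows "p = [:poly p 0:]"
proof (rule ccontr)
  assume ne: "p \<noteq> [:poly p 0:]"
  let ?q = "p - [:poly p 0:]"
  have q0: "?q \<noteq> 0" using ne by simp
  have per: "poly p (x - 2) = poly p x" for x
    using arg_cong[OF assms, of "\<lambda>r. poly r x"] by (simp add: poly_pcompose algebra_simps)
  have "poly p (- 2 * of_nat n) = poly p 0" for n
  proof (induction n)
    case 0 then show ?case by simp
  next
    case (Suc n)
    have e: "- 2 * of_nat (Suc n) = - 2 * (of_nat n :: complex) - 2" by (simp add: algebra_simps)
    have "poly p (- 2 * of_nat (Suc n)) = poly p (- 2 * of_nat n - 2)" by (simp only: e)
    also have "\<dots> = poly p (- 2 * of_nat n)" by (rule per)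
    finally show ?case using Suc by simp
  qed
  then have "range (\<lambda>n::nat. - 2 * (of_nat n :: complex)) \<subseteq> {x. poly ?q x = 0}" by auto
  moreover have "infinite (range (\<lambda>n::nat. - 2 * (of_nat n :: complex)))"
    by (rule range_inj_infinite) (simp add: inj_on_def)
  ultimately have "infinite {x. poly ?q x = 0}" using finite_subset by blast
  then show False using poly_roots_finite[OF q0] by simp
qed

lemma delta_degree:
  fixes p :: "complex poly"
  assumes "degree p > 0"
  shows "degree (pcompose p [:-2, 1:] - p) < degree p"
proof -
  let ?r = "pcompose p [:-2, 1:] - p"
  have d: "degree (pcompose p [:-2, 1:]) = degree p" by (simp add: degree_pcompose)
  have l: "lead_coeff (pcompose p [:-2, 1:]) = lead_coeff p" by (simp add: lead_coeff_comp)
  have le: "degree ?r \<le> degree p" using degree_diff_le[of "pcompose p [:-2, 1:]" "degree p" p] d by simp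
  have "coeff (pcompose p [:-2, 1:]) (degree p) = coeff p (degree p)" using l d by metis
  then have c: "coeff ?r (degree p) = 0" by (simp add: coeff_diff)
  show ?thesis
  proof (cases "?r = 0")
    case True then show ?thesis using assms by simp
  next
    case False
    then have "coeff ?r (degree ?r) \<noteq> 0" using leading_coeff_0_iff by blast
    then have "degree ?r \<noteq> degree p" using c by auto
    then show ?thesis using le by simp
  qed
qed

lemma degree0_const: "degree (p :: complex poly) = 0 \<Longrightarrow> p = [:coeff p 0:]"
  by (metis degree_0_id)

section \<open>Quadruples of polynomials and the explicit action\<close>

type_synonym quad = "complex poly \<times> complex poly \<times> complex poly \<times> complex poly"

fun qsc :: "complex \<Rightarrow> quad \<Rightarrow> quad" where
  "qsc c (p0, p2, p3, p23) = (smult c p0, smult c p2, smult c p3, smult c p23)"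

definition mA :: "complex \<Rightarrow> complex poly \<Rightarrow> complex poly" where
  "mA s p = [:s/2, 1/2:] * p"
definition mB :: "complex \<Rightarrow> complex poly \<Rightarrow> complex poly" where
  "mB s p = [:s/2, -1/2:] * p"
definition mE :: "complex \<Rightarrow> complex poly \<Rightarrow> complex poly" where
  "mE a p = smult a (pcompose p [:-2, 1:])"
definition mF :: "complex \<Rightarrow> complex \<Rightarrow> complex poly \<Rightarrow> complex poly" where
  "mF k a p = pcompose p [:2, 1:] * smult (1/(4*a)) [:k, -2, -1:]"

fun TT :: "complex \<Rightarrow> complex \<Rightarrow> complex \<Rightarrow> complex \<Rightarrow> idx \<Rightarrow> idx \<Rightarrow> quad \<Rightarrow> quad" where
  "TT l s k a I1 I1 (p0, p2, p3, p23) = (smult l p0, smult (l - 1) p2, smult (l - 1) p3, smult (l - 2) p23)"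
| "TT l s k a I2 I2 (p0, p2, p3, p23) = (mA s p0, mA s p2 + p2, mA s p3, mA s p23 + p23)"
| "TT l s k a I3 I3 (p0, p2, p3, p23) = (mB s p0, mB s p2, mB s p3 + p3, mB s p23 + p23)"
| "TT l s k a I2 I3 (p0, p2, p3, p23) = (mE a p0, mE a p2 + p3, mE a p3, mE a p23)"
| "TT l s k a I3 I2 (p0, p2, p3, p23) = (mF k a p0, mF k a p2, mF k a p3 + p2, mF k a p23)"
| "TT l s k a I2 I1 (p0, p2, p3, p23) = (0, p0, 0, p3)"
| "TT l s k a I3 I1 (p0, p2, p3, p23) = (0, 0, p0, - p2)"
| "TT l s k a I1 I2 (p0, p2, p3, p23) = (smult l p2 + mA s p2 + mF k a p3, - mF k a p23, smult l p23 + mA s p23 - p23, 0)"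
| "TT l s k a I1 I3 (p0, p2, p3, p23) = (mE a p2 + smult l p3 + mB s p3, p23 - smult l p23 - mB s p23, mE a p23, 0)"

lemmas m_defs = mA_def mB_def mE_def mF_def

lemma qsc_add: "qsc c (P + Q) = qsc c P + qsc c Q"
  by (cases P; cases Q) (simp add: smult_add_right)
lemma qsc_qsc: "qsc c (qsc d P) = qsc (c * d) P"
  by (cases P) simp
lemma qsc_one[simp]: "qsc 1 P = P"
  by (cases P) simp
lemma qsc_zero[simp]: "qsc 0 P = 0"
  by (cases P) (simp add: zero_prod_def)
lemma qsc_zero_right[simp]: "qsc c 0 = 0"
  by (simp add: zero_prod_def)
lemma qsc_diff: "qsc c (P - Q) = qsc c P - qsc c Q"
  by (cases P; cases Q) (simp add: smult_diff_right)
lemma qsc_add_left: "qsc (c + d) P = qsc c P + qsc d P"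
  by (cases P) (simp add: smult_add_left)

lemma TT_add: "TT l s k a i j (P + Q) = TT l s k a i j P + TT l s k a i j Q"
  by (cases P; cases Q; cases i; cases j) (auto simp: m_defs poly_ext_iff poly_pcompose algebra_simps)

lemma TT_qsc: "TT l s k a i j (qsc c P) = qsc c (TT l s k a i j P)"
  by (cases P; cases i; cases j) (auto simp: m_defs poly_ext_iff poly_pcompose algebra_simps)

lemma TT_bracket:
  assumes "a \<noteq> 0"
  shows "TT l s kp a i j (TT l s kp a m n P) - qsc (ssign i j m n) (TT l s kp a m n (TT l s kp a i j P)) =
    (if j = m then TT l s kp a i n P else 0) - qsc (ssign i j m n) (if n = i then TT l s kp a m j P else 0)"
  using assms
  by (cases P; cases i; cases j; cases m; cases n)
     (simp_all add: ssign_def m_defs poly_ext_iff poly_pcompose zero_prod_def field_simps)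

definition polyop :: "(idx \<Rightarrow> idx \<Rightarrow> 'v \<Rightarrow> 'v) \<Rightarrow> complex poly \<Rightarrow> 'v::cvs \<Rightarrow> 'v" where
  "polyop act p x = foldr (\<lambda>c z. c *\<^sub>C x + H0 act z) (coeffs p) 0"

lemma polyop_0[simp]: "polyop act 0 x = 0"
  by (simp add: polyop_def)

lemma two_cscale: "(x::'v::cvs) + x = 2 *\<^sub>C x"
  by (metis cscale_add_left cscale_one one_add_one)

lemma self_neg_zero: "(x::'v::cvs) = - x \<Longrightarrow> x = 0"
proof -
  assume "x = - x"
  then have "x + x = 0" by (metis add.right_inverse)
  then have "2 *\<^sub>C x = 0" by (simp add: two_cscale)
  then show "x = 0" by (rule cscale_cancel[rotated]) simp
qed

locale rep =
  fixes S :: "'v::cvs set" and act :: "idx \<Rightarrow> idx \<Rightarrow> 'v \<Rightarrow> 'v"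
  assumes isrep: "is_rep S act"
begin

lemma zero_in[simp]: "0 \<in> S"
  using isrep by (simp add: is_rep_def subspace_c_def)
lemma add_in[simp]: "x \<in> S \<Longrightarrow> y \<in> S \<Longrightarrow> x + y \<in> S"
  using isrep by (simp add: is_rep_def subspace_c_def)
lemma sc_in[simp]: "x \<in> S \<Longrightarrow> c *\<^sub>C x \<in> S"
  using isrep by (simp add: is_rep_def subspace_c_def)
lemma uminus_in[simp]: "x \<in> S \<Longrightarrow> - x \<in> S"
  using sc_in[of x "-1"] by simp
lemma diff_in[simp]: "x \<in> S \<Longrightarrow> y \<in> S \<Longrightarrow> x - y \<in> S"
  using add_in[of x "- y"] by simp
lemma act_in[simp]: "x \<in> S \<Longrightarrow> act i j x \<in> S"
  using isrep by (simp add: is_rep_def)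
lemma act_add[simp]: "x \<in> S \<Longrightarrow> y \<in> S \<Longrightarrow> act i j (x + y) = act i j x + act i j y"
  using isrep by (simp add: is_rep_def)
lemma act_sc[simp]: "x \<in> S \<Longrightarrow> act i j (c *\<^sub>C x) = c *\<^sub>C act i j x"
  using isrep by (simp add: is_rep_def)
lemma act_zero[simp]: "act i j 0 = 0"
  using act_add[of 0 0 i j] by simp
lemma act_uminus[simp]: "x \<in> S \<Longrightarrow> act i j (- x) = - act i j x"
  using act_sc[of x i j "-1"] by simp
lemma act_diff[simp]: "x \<in> S \<Longrightarrow> y \<in> S \<Longrightarrow> act i j (x - y) = act i j x - act i j y"
  using act_add[of x "- y" i j] by simp
lemma act_br: "x \<in> S \<Longrightarrow> act i j (act k l x) - ssign i j k l *\<^sub>C act k l (act i j x) =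
        (if j = k then act i l x else 0) - ssign i j k l *\<^sub>C (if l = i then act k j x else 0)"
  using isrep by (simp add: is_rep_def)

lemma comm_even: "ssign i j k l = 1 \<Longrightarrow> x \<in> S \<Longrightarrow> act i j (act k l x) =
   act k l (act i j x) + ((if j = k then act i l x else 0) - (if l = i then act k j x else 0))"
proof -
  assume a1: "ssign i j k l = 1" and x: "x \<in> S"
  have "act i j (act k l x) - act k l (act i j x) = (if j = k then act i l x else 0) - (if l = i then act k j x else 0)"
    using act_br[OF x, of i j k l] a1 by (simp add: cscale_one)
  then show ?thesis by (metis add.commute diff_add_cancel)
qed

lemma comm_odd: "ssign i j k l = -1 \<Longrightarrow> x \<in> S \<Longrightarrow> act i j (act k l x) =
   - act k l (act i j x) + ((if j = k then act i l x else 0) + (if l = i then act k j x else 0))"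
  using act_br[of x i j k l] by (simp add: eq_diff_eq add.commute)

lemma H0_in[simp]: "x \<in> S \<Longrightarrow> H0 act x \<in> S"
  by (simp add: H0_def)
lemma H0_add[simp]: "x \<in> S \<Longrightarrow> y \<in> S \<Longrightarrow> H0 act (x + y) = H0 act x + H0 act y"
  by (simp add: H0_def algebra_simps)
lemma H0_sc[simp]: "x \<in> S \<Longrightarrow> H0 act (c *\<^sub>C x) = c *\<^sub>C H0 act x"
  by (simp add: H0_def cscale_diff_right)
lemma H0_zero[simp]: "H0 act 0 = 0"
  by (simp add: H0_def)
lemma H0_uminus[simp]: "x \<in> S \<Longrightarrow> H0 act (- x) = - H0 act x"
  by (simp add: H0_def)
lemma H0_diff[simp]: "x \<in> S \<Longrightarrow> y \<in> S \<Longrightarrow> H0 act (x - y) = H0 act x - H0 act y"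
  by (simp add: H0_def)

lemma polyop_pCons: "x \<in> S \<Longrightarrow> polyop act (pCons c p) x = c *\<^sub>C x + H0 act (polyop act p x)"
  by (cases "p = 0 \<and> c = 0") (auto simp: polyop_def cCons_def)

lemma polyop_in[simp]: "x \<in> S \<Longrightarrow> polyop act p x \<in> S"
  by (induction p) (simp_all add: polyop_pCons)

lemma polyop_add_vec: "x \<in> S \<Longrightarrow> y \<in> S \<Longrightarrow> polyop act p (x + y) = polyop act p x + polyop act p y"
  by (induction p) (simp_all add: polyop_pCons cscale_add_right algebra_simps)

lemma polyop_sc_vec: "x \<in> S \<Longrightarrow> polyop act p (c *\<^sub>C x) = c *\<^sub>C polyop act p x"
  by (induction p) (simp_all add: polyop_pCons cscale_add_right cscale_cscale mult.commute)

lemma polyop_add[simp]: "x \<in> S \<Longrightarrow> polyop act (p + q) x = polyop act p x + polyop act q x"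
proof (induction p arbitrary: q)
  case 0 then show ?case by simp
next
  case (pCons c p)
  show ?case
  proof (cases q)
    case (pCons d q')
    have ih: "polyop act (p + q') x = polyop act p x + polyop act q' x" using pCons.IH pCons.prems by blast
    show ?thesis using ih pCons.prems \<open>q = pCons d q'\<close> by (simp add: polyop_pCons cscale_add_left add_ac)
  qed
qed

lemma polyop_smult[simp]: "x \<in> S \<Longrightarrow> polyop act (smult c p) x = c *\<^sub>C polyop act p x"
  by (induction p) (simp_all add: polyop_pCons cscale_add_right cscale_cscale)

lemma polyop_uminus[simp]: "x \<in> S \<Longrightarrow> polyop act (- p) x = - polyop act p x"
  using polyop_smult[of x "-1" p] by simp

lemma polyop_diff[simp]: "x \<in> S \<Longrightarrow> polyop act (p - q) x = polyop act p x - polyop act q x"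
  using polyop_add[of x p "- q"] by simp

lemma polyop_const[simp]: "x \<in> S \<Longrightarrow> polyop act [:c:] x = c *\<^sub>C x"
  by (simp add: polyop_pCons)

lemma polyop_one[simp]: "x \<in> S \<Longrightarrow> polyop act 1 x = x"
  by (simp add: one_pCons polyop_pCons cscale_one)

lemma polyop_X: "x \<in> S \<Longrightarrow> polyop act (pCons 0 p) x = H0 act (polyop act p x)"
  by (simp add: polyop_pCons)

lemma polyop_mult: "x \<in> S \<Longrightarrow> polyop act (p * q) x = polyop act p (polyop act q x)"
  by (induction p) (simp_all add: polyop_pCons)

lemma polyop_comm:
  assumes Xin: "\<And>y. y \<in> S \<Longrightarrow> X y \<in> S"
    and Xadd: "\<And>y z. y \<in> S \<Longrightarrow> z \<in> S \<Longrightarrow> X (y + z) = X y + X z"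
    and Xsc: "\<And>y c. y \<in> S \<Longrightarrow> X (c *\<^sub>C y) = c *\<^sub>C X y"
    and XH: "\<And>y. y \<in> S \<Longrightarrow> H0 act (X y) = X (H0 act y) + d *\<^sub>C X y"
    and y: "y \<in> S"
  shows "X (polyop act q y) = polyop act (pcompose q [:- d, 1:]) (X y)"
proof (induction q)
  case 0
  have "X 0 = X 0 + X 0" using Xadd[of 0 0] by simp
  then show ?case by simp
next
  case (pCons c q)
  let ?z = "polyop act q y"
  have z: "?z \<in> S" using y by simp
  have XH': "X (H0 act ?z) = H0 act (X ?z) - d *\<^sub>C X ?z" using XH[OF z] by simp
  have "X (polyop act (pCons c q) y) = c *\<^sub>C X y + X (H0 act ?z)"
    using y z by (simp add: polyop_pCons Xadd Xsc)
  also have "\<dots> = c *\<^sub>C X y + H0 act (polyop act (pcompose q [:- d, 1:]) (X y))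
       - d *\<^sub>C polyop act (pcompose q [:- d, 1:]) (X y)"
    using XH' pCons by (simp add: algebra_simps)
  also have "\<dots> = polyop act (pcompose (pCons c q) [:- d, 1:]) (X y)"
    using y Xin by (simp add: pcompose_pCons polyop_pCons polyop_X cscale_minus_left algebra_simps)
  finally show ?case .
qed

end

context rep
begin

lemma c21_21[simp]: "x \<in> S \<Longrightarrow> act I2 I1 (act I2 I1 x) = 0"
  using comm_odd[of I2 I1 I2 I1 x] by (simp add: ssign_def self_neg_zero)
lemma c31_31[simp]: "x \<in> S \<Longrightarrow> act I3 I1 (act I3 I1 x) = 0"
  using comm_odd[of I3 I1 I3 I1 x] by (simp add: ssign_def self_neg_zero)
lemma c31_21[simp]: "x \<in> S \<Longrightarrow> act I3 I1 (act I2 I1 x) = - act I2 I1 (act I3 I1 x)"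
  using comm_odd[of I3 I1 I2 I1 x] by (simp add: ssign_def)

lemma c11_21[simp]: "x \<in> S \<Longrightarrow> act I1 I1 (act I2 I1 x) = act I2 I1 (act I1 I1 x) - act I2 I1 x"
  using comm_even[of I1 I1 I2 I1 x] by (simp add: ssign_def)
lemma c22_21[simp]: "x \<in> S \<Longrightarrow> act I2 I2 (act I2 I1 x) = act I2 I1 (act I2 I2 x) + act I2 I1 x"
  using comm_even[of I2 I2 I2 I1 x] by (simp add: ssign_def)
lemma c33_21[simp]: "x \<in> S \<Longrightarrow> act I3 I3 (act I2 I1 x) = act I2 I1 (act I3 I3 x)"
  using comm_even[of I3 I3 I2 I1 x] by (simp add: ssign_def)
lemma c23_21[simp]: "x \<in> S \<Longrightarrow> act I2 I3 (act I2 I1 x) = act I2 I1 (act I2 I3 x)"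
  using comm_even[of I2 I3 I2 I1 x] by (simp add: ssign_def)
lemma c32_21[simp]: "x \<in> S \<Longrightarrow> act I3 I2 (act I2 I1 x) = act I2 I1 (act I3 I2 x) + act I3 I1 x"
  using comm_even[of I3 I2 I2 I1 x] by (simp add: ssign_def)

lemma c11_31[simp]: "x \<in> S \<Longrightarrow> act I1 I1 (act I3 I1 x) = act I3 I1 (act I1 I1 x) - act I3 I1 x"
  using comm_even[of I1 I1 I3 I1 x] by (simp add: ssign_def)
lemma c22_31[simp]: "x \<in> S \<Longrightarrow> act I2 I2 (act I3 I1 x) = act I3 I1 (act I2 I2 x)"
  using comm_even[of I2 I2 I3 I1 x] by (simp add: ssign_def)
lemma c33_31[simp]: "x \<in> S \<Longrightarrow> act I3 I3 (act I3 I1 x) = act I3 I1 (act I3 I3 x) + act I3 I1 x"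
  using comm_even[of I3 I3 I3 I1 x] by (simp add: ssign_def)
lemma c23_31[simp]: "x \<in> S \<Longrightarrow> act I2 I3 (act I3 I1 x) = act I3 I1 (act I2 I3 x) + act I2 I1 x"
  using comm_even[of I2 I3 I3 I1 x] by (simp add: ssign_def)
lemma c32_31[simp]: "x \<in> S \<Longrightarrow> act I3 I2 (act I3 I1 x) = act I3 I1 (act I3 I2 x)"
  using comm_even[of I3 I2 I3 I1 x] by (simp add: ssign_def)

lemma c12_21[simp]: "x \<in> S \<Longrightarrow> act I1 I2 (act I2 I1 x) = - act I2 I1 (act I1 I2 x) + (act I1 I1 x + act I2 I2 x)"
  using comm_odd[of I1 I2 I2 I1 x] by (simp add: ssign_def)
lemma c12_31[simp]: "x \<in> S \<Longrightarrow> act I1 I2 (act I3 I1 x) = - act I3 I1 (act I1 I2 x) + act I3 I2 x"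
  using comm_odd[of I1 I2 I3 I1 x] by (simp add: ssign_def)
lemma c13_21[simp]: "x \<in> S \<Longrightarrow> act I1 I3 (act I2 I1 x) = - act I2 I1 (act I1 I3 x) + act I2 I3 x"
  using comm_odd[of I1 I3 I2 I1 x] by (simp add: ssign_def)
lemma c13_31[simp]: "x \<in> S \<Longrightarrow> act I1 I3 (act I3 I1 x) = - act I3 I1 (act I1 I3 x) + (act I1 I1 x + act I3 I3 x)"
  using comm_odd[of I1 I3 I3 I1 x] by (simp add: ssign_def)

lemma H0_11: "y \<in> S \<Longrightarrow> H0 act (act I1 I1 y) = act I1 I1 (H0 act y) + 0 *\<^sub>C act I1 I1 y"
  using comm_even[of I2 I2 I1 I1 y] comm_even[of I3 I3 I1 I1 y] by (simp add: H0_def ssign_def)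
lemma H0_Z: "y \<in> S \<Longrightarrow> H0 act (act I2 I2 y + act I3 I3 y) = (act I2 I2 (H0 act y) + act I3 I3 (H0 act y)) + 0 *\<^sub>C (act I2 I2 y + act I3 I3 y)"
  using comm_even[of I2 I2 I3 I3 y] by (simp add: H0_def ssign_def algebra_simps)
lemma H0_23: "y \<in> S \<Longrightarrow> H0 act (act I2 I3 y) = act I2 I3 (H0 act y) + 2 *\<^sub>C act I2 I3 y"
  using comm_even[of I2 I2 I2 I3 y] comm_even[of I3 I3 I2 I3 y]
  by (simp add: H0_def ssign_def two_cscale[symmetric] algebra_simps)
lemma H0_32: "y \<in> S \<Longrightarrow> H0 act (act I3 I2 y) = act I3 I2 (H0 act y) + (- 2) *\<^sub>C act I3 I2 y"
  using comm_even[of I2 I2 I3 I2 y] comm_even[of I3 I3 I3 I2 y]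
  by (simp add: H0_def ssign_def cscale_minus_left two_cscale[symmetric] algebra_simps)
lemma H0_12: "y \<in> S \<Longrightarrow> H0 act (act I1 I2 y) = act I1 I2 (H0 act y) + (- 1) *\<^sub>C act I1 I2 y"
  using comm_even[of I2 I2 I1 I2 y] comm_even[of I3 I3 I1 I2 y]
  by (simp add: H0_def ssign_def algebra_simps)
lemma H0_13: "y \<in> S \<Longrightarrow> H0 act (act I1 I3 y) = act I1 I3 (H0 act y) + 1 *\<^sub>C act I1 I3 y"
  using comm_even[of I2 I2 I1 I3 y] comm_even[of I3 I3 I1 I3 y]
  by (simp add: H0_def ssign_def cscale_one algebra_simps)

lemma polyop_zero_vec[simp]: "polyop act p 0 = 0"
  by (induction p) (simp_all add: polyop_pCons)

lemma polyop_act: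
  assumes "\<And>y. y \<in> S \<Longrightarrow> H0 act (act i j y) = act i j (H0 act y) + d *\<^sub>C act i j y" "y \<in> S"
  shows "act i j (polyop act q y) = polyop act (pcompose q [:- d, 1:]) (act i j y)"
  by (rule polyop_comm) (use assms in auto)

end

locale wmod = rep +
  fixes v0 :: "'v::cvs" and lam :: weight and zeta :: "idx \<Rightarrow> idx \<Rightarrow> complex"
  assumes v0_in[simp]: "v0 \<in> S" and wg: "whitt_gen lam zeta act v0" and a_nz: "zeta I2 I3 \<noteq> 0"
begin

abbreviation "aa \<equiv> zeta I2 I3"
abbreviation "l1 \<equiv> lam I1"
abbreviation "ss \<equiv> lam I2 + lam I3"
definition kp where "kp = (lam I2 - lam I3)^2 + 2 * (lam I2 - lam I3)"
abbreviation "Tm \<equiv> TT l1 ss kp aa"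
abbreviation "A p \<equiv> polyop act p v0"

lemma v12[simp]: "act I1 I2 v0 = 0" using wg by (simp add: whitt_gen_def)
lemma v13[simp]: "act I1 I3 v0 = 0" using wg by (simp add: whitt_gen_def)
lemma v23[simp]: "act I2 I3 v0 = aa *\<^sub>C v0" using wg by (simp add: whitt_gen_def)
lemma v11[simp]: "act I1 I1 v0 = l1 *\<^sub>C v0" using wg by (simp add: whitt_gen_def)
lemma vZ: "act I2 I2 v0 + act I3 I3 v0 = ss *\<^sub>C v0" using wg by (simp add: whitt_gen_def)
lemma vC: "H0 act (H0 act v0) + 2 *\<^sub>C act I2 I3 (act I3 I2 v0) + 2 *\<^sub>C act I3 I2 (act I2 I3 v0) = kp *\<^sub>C v0"
  using wg by (simp add: whitt_gen_def kp_def)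

lemma A_11[simp]: "act I1 I1 (A p) = l1 *\<^sub>C A p"
  using polyop_act[OF H0_11, of v0 p] by (simp add: polyop_sc_vec)
lemma A_12[simp]: "act I1 I2 (A p) = 0"
  using polyop_act[OF H0_12, of v0 p] by simp
lemma A_13[simp]: "act I1 I3 (A p) = 0"
  using polyop_act[OF H0_13, of v0 p] by simp
lemma A_23[simp]: "act I2 I3 (A p) = A (mE aa p)"
  using polyop_act[OF H0_23, of v0 p] by (simp add: polyop_sc_vec mE_def)
lemma A_Z: "act I2 I2 (A p) + act I3 I3 (A p) = ss *\<^sub>C A p"
proof -
  have "act I2 I2 (A p) + act I3 I3 (A p) = polyop act (pcompose p [:- 0, 1:]) (act I2 I2 v0 + act I3 I3 v0)"
    by (rule polyop_comm[where X="\<lambda>y. act I2 I2 y + act I3 I3 y" and d=0, OF _ _ _ H0_Z]) (auto simp: cscale_add_right)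
  then show ?thesis by (simp add: vZ polyop_sc_vec)
qed
lemma A_H0: "H0 act (A p) = A (pCons 0 p)"
  by (simp add: polyop_X)

lemma half_sum: "(1/2) *\<^sub>C ((x::'v) + x) = x"
  by (simp add: two_cscale cscale_cscale cscale_one)

lemma A_22[simp]: "act I2 I2 (A p) = A (mA ss p)"
proof -
  have "act I2 I2 (A p) = (1/2) *\<^sub>C (H0 act (A p) + (act I2 I2 (A p) + act I3 I3 (A p)))"
    by (simp add: H0_def half_sum[symmetric] algebra_simps)
  also have "\<dots> = (1/2) *\<^sub>C (A (pCons 0 p) + ss *\<^sub>C A p)" by (simp add: A_H0 A_Z)
  also have "\<dots> = A (smult (1/2) (pCons 0 p) + smult (ss/2) p)"
    by (simp add: cscale_add_right cscale_cscale polyop_X)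
  also have "smult (1/2) (pCons 0 p) + smult (ss/2) p = mA ss p"
    by (simp add: mA_def poly_ext_iff algebra_simps)
  finally show ?thesis .
qed

lemma A_33[simp]: "act I3 I3 (A p) = A (mB ss p)"
proof -
  have "act I3 I3 (A p) = (act I2 I2 (A p) + act I3 I3 (A p)) - act I2 I2 (A p)" by simp
  also have "\<dots> = A (smult ss p - mA ss p)" by (simp add: A_Z del: A_22) (simp)
  also have "smult ss p - mA ss p = mB ss p"
    by (simp add: mA_def mB_def poly_ext_iff algebra_simps)
  finally show ?thesis .
qed

definition Kp :: "complex poly" where "Kp = smult (1/(4*aa)) [:kp, -2, -1:]"

lemma E32c: "act I2 I3 (act I3 I2 v0) = act I3 I2 (act I2 I3 v0) + H0 act v0"
  using comm_even[of I2 I3 I3 I2 v0] by (simp add: ssign_def H0_def)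

lemma E32h: "H0 act (H0 act v0) + 2 *\<^sub>C (aa *\<^sub>C act I3 I2 v0 + H0 act v0) + 2 *\<^sub>C (aa *\<^sub>C act I3 I2 v0) = kp *\<^sub>C v0"
proof -
  have "act I2 I3 (act I3 I2 v0) = aa *\<^sub>C act I3 I2 v0 + H0 act v0" using E32c by simp
  moreover have "act I3 I2 (act I2 I3 v0) = aa *\<^sub>C act I3 I2 v0" by simp
  ultimately show ?thesis using vC by metis
qed

lemma E32e: "(4 * aa) *\<^sub>C act I3 I2 v0 = kp *\<^sub>C v0 - 2 *\<^sub>C H0 act v0 - H0 act (H0 act v0)"
proof -
  have h2: "H0 act (H0 act v0) + ((2 * aa) *\<^sub>C act I3 I2 v0 + 2 *\<^sub>C H0 act v0) + (2 * aa) *\<^sub>C act I3 I2 v0 = kp *\<^sub>C v0"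
    using E32h by (simp only: cscale_add_right cscale_cscale)
  have h3: "(4 * aa) *\<^sub>C act I3 I2 v0 = (2 * aa) *\<^sub>C act I3 I2 v0 + (2 * aa) *\<^sub>C act I3 I2 v0"
  proof -
    have "(4 * aa) = 2 * aa + 2 * aa" by simp
    then show ?thesis by (simp only: cscale_add_left[symmetric])
  qed
  have ag: "\<And>(h::'v) x t k. h + (x + t) + x = k \<Longrightarrow> x + x = k - t - h"
    by (simp add: algebra_simps)
  show ?thesis using ag[OF h2] h3 by simp
qed

lemma E32A: "A [:kp, -2, -1:] = kp *\<^sub>C v0 - 2 *\<^sub>C H0 act v0 - H0 act (H0 act v0)"
proof -
  have "A [:kp, -2, -1:] = kp *\<^sub>C v0 + H0 act ((-2) *\<^sub>C v0 + H0 act ((-1) *\<^sub>C v0 + H0 act 0))"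
    by (simp only: polyop_pCons v0_in polyop_0)
  also have "\<dots> = kp *\<^sub>C v0 - 2 *\<^sub>C H0 act v0 - H0 act (H0 act v0)"
  proof -
    have "H0 act ((-2) *\<^sub>C v0 + H0 act ((-1) *\<^sub>C v0 + H0 act 0)) = - (2 *\<^sub>C H0 act v0) + - H0 act (H0 act v0)"
      by (simp only: H0_zero add_0_right cscale_neg1 cscale_one cscale_minus_left H0_add H0_uminus H0_sc sc_in uminus_in H0_in v0_in)
    then show ?thesis by (simp only: diff_conv_add_uminus add.assoc)
  qed
  finally show ?thesis .
qed


lemma E32_v0: "act I3 I2 v0 = A Kp"
proof -
  have f1: "(4 * aa) *\<^sub>C A Kp = ((4 * aa) * (1 / (4 * aa))) *\<^sub>C A [:kp, -2, -1:]"
    by (simp only: Kp_def polyop_smult[OF v0_in] cscale_cscale)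
  have f2: "(4 * aa) * (1 / (4 * aa)) = 1" using a_nz by simp
  have "(4 * aa) *\<^sub>C A Kp = (4 * aa) *\<^sub>C act I3 I2 v0"
    using f1 unfolding f2 cscale_one E32A E32e[symmetric] .
  moreover have "4 * aa \<noteq> 0" using a_nz by simp
  ultimately have "A Kp = act I3 I2 v0" using cscale_inj by blast
  then show ?thesis by (rule sym)
qed

lemma A_32[simp]: "act I3 I2 (A p) = A (mF kp aa p)"
proof -
  have "act I3 I2 (A p) = polyop act (pcompose p [:- (-2), 1:]) (act I3 I2 v0)"
    by (rule polyop_act[OF H0_32]) simp_all
  also have "\<dots> = A (pcompose p [:2, 1:] * Kp)"
    by (simp only: E32_v0 polyop_mult[OF v0_in] minus_minus)
  also have "pcompose p [:2, 1:] * Kp = mF kp aa p" by (simp only: mF_def Kp_def)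
  finally show ?thesis .
qed

definition Phi :: "quad \<Rightarrow> 'v" where
  "Phi P = (case P of (p0, p2, p3, p23) \<Rightarrow> A p0 + act I2 I1 (A p2) + act I3 I1 (A p3) + act I2 I1 (act I3 I1 (A p23)))"

lemma Phi_simp: "Phi (p0, p2, p3, p23) = A p0 + act I2 I1 (A p2) + act I3 I1 (A p3) + act I2 I1 (act I3 I1 (A p23))"
  by (simp add: Phi_def)

lemmas csimps = cscale_add_left cscale_diff_left cscale_one cscale_cscale cscale_add_right cscale_diff_right
  cscale_minus_left cscale_minus_right two_cscale[symmetric]

lemma Phi_equiv_11: "act I1 I1 (Phi (p0, p2, p3, p23)) = Phi (Tm I1 I1 (p0, p2, p3, p23))"
  by (simp add: Phi_simp csimps algebra_simps)

lemma Phi_equiv_22: "act I2 I2 (Phi (p0, p2, p3, p23)) = Phi (Tm I2 I2 (p0, p2, p3, p23))"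
  by (simp add: Phi_simp csimps algebra_simps)

lemma Phi_equiv_33: "act I3 I3 (Phi (p0, p2, p3, p23)) = Phi (Tm I3 I3 (p0, p2, p3, p23))"
  by (simp add: Phi_simp csimps algebra_simps)

lemma Phi_equiv_23: "act I2 I3 (Phi (p0, p2, p3, p23)) = Phi (Tm I2 I3 (p0, p2, p3, p23))"
  by (simp add: Phi_simp csimps algebra_simps)

lemma Phi_equiv_32: "act I3 I2 (Phi (p0, p2, p3, p23)) = Phi (Tm I3 I2 (p0, p2, p3, p23))"
  by (simp add: Phi_simp csimps algebra_simps)

lemma Phi_equiv_21: "act I2 I1 (Phi (p0, p2, p3, p23)) = Phi (Tm I2 I1 (p0, p2, p3, p23))"
  by (simp add: Phi_simp csimps algebra_simps)

lemma Phi_equiv_31: "act I3 I1 (Phi (p0, p2, p3, p23)) = Phi (Tm I3 I1 (p0, p2, p3, p23))"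
  by (simp add: Phi_simp csimps algebra_simps)

lemma Phi_equiv_12: "act I1 I2 (Phi (p0, p2, p3, p23)) = Phi (Tm I1 I2 (p0, p2, p3, p23))"
  by (simp add: Phi_simp csimps algebra_simps)

lemma Phi_equiv_13: "act I1 I3 (Phi (p0, p2, p3, p23)) = Phi (Tm I1 I3 (p0, p2, p3, p23))"
  by (simp add: Phi_simp csimps algebra_simps)

lemma Phi_equiv: "act i j (Phi P) = Phi (Tm i j P)"
proof -
  obtain p0 p2 p3 p23 where P: "P = (p0, p2, p3, p23)" by (cases P) auto
  show ?thesis unfolding P
    by (cases i; cases j) (simp_all only: Phi_equiv_11 Phi_equiv_22 Phi_equiv_33 Phi_equiv_23
       Phi_equiv_32 Phi_equiv_21 Phi_equiv_31 Phi_equiv_12 Phi_equiv_13)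
qed

lemma Phi_in[simp]: "Phi P \<in> S"
  by (cases P) (simp add: Phi_simp)

lemma Phi_add: "Phi (P + Q) = Phi P + Phi Q"
  by (cases P; cases Q) (simp add: Phi_simp algebra_simps)

lemma Phi_qsc: "Phi (qsc c P) = c *\<^sub>C Phi P"
  by (cases P) (simp add: Phi_simp cscale_add_right)

lemma Phi_zero[simp]: "Phi 0 = 0"
  by (simp add: zero_prod_def Phi_simp)

lemma Phi_diff: "Phi (P - Q) = Phi P - Phi Q"
  using Phi_add[of "P - Q" Q] by (simp add: eq_diff_eq)

lemma Phi_v0: "Phi (1, 0, 0, 0) = v0"
  by (simp add: Phi_simp)

end

fun ilc :: "quad \<Rightarrow> nat \<Rightarrow> complex" where
  "ilc (p0, p2, p3, p23) n = (if n mod 4 = 0 then coeff p0 (n div 4) else if n mod 4 = 1 then coeff p2 (n div 4)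
     else if n mod 4 = 2 then coeff p3 (n div 4) else coeff p23 (n div 4))"

definition ilv :: "quad \<Rightarrow> complex poly" where "ilv P = Abs_poly (ilc P)"

lemma ilc_vanish:
  assumes "i > 4 * (degree p0 + degree p2 + degree p3 + degree p23) + 3"
  shows "ilc (p0, p2, p3, p23) i = 0"
proof -
  let ?D = "degree p0 + degree p2 + degree p3 + degree p23"
  have "4 * (?D + 1) \<le> i" using assms by simp
  then have "(4 * (?D + 1)) div 4 \<le> i div 4" by (rule div_le_mono)
  then have d: "?D + 1 \<le> i div 4" by simp
  have "coeff p0 (i div 4) = 0" "coeff p2 (i div 4) = 0" "coeff p3 (i div 4) = 0" "coeff p23 (i div 4) = 0"
    using d by (auto intro!: coeff_eq_0)
  then show ?thesis by simp
qed

lemma coeff_ilv: "coeff (ilv P) = ilc P"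
proof -
  obtain p0 p2 p3 p23 where P: "P = (p0, p2, p3, p23)" by (cases P) auto
  show ?thesis unfolding ilv_def P
    by (rule coeff_Abs_poly[where n = "4 * (degree p0 + degree p2 + degree p3 + degree p23) + 3"])
       (rule ilc_vanish)
qed

lemma ilv_add: "ilv (P + Q) = ilv P + ilv Q"
  by (cases P; cases Q) (simp add: poly_eq_iff coeff_ilv)

lemma ilv_qsc: "ilv (qsc c P) = smult c (ilv P)"
  by (cases P) (simp add: poly_eq_iff coeff_ilv)

lemma ilv_diff: "ilv (P - Q) = ilv P - ilv Q"
  using ilv_add[of "P - Q" Q] by (simp add: eq_diff_eq)

lemma ilv_zero: "ilv P = 0 \<Longrightarrow> P = 0"
proof -
  assume h: "ilv P = 0"
  obtain p0 p2 p3 p23 where P: "P = (p0, p2, p3, p23)" by (cases P) auto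
  have c: "ilc P n = 0" for n using h by (metis coeff_0 coeff_ilv)
  have e1: "Suc (4 * k) div 4 = k" "Suc (Suc (4 * k)) div 4 = k" "Suc (Suc (Suc (4 * k))) div 4 = k" for k
    by presburger+
  have e2: "Suc (4 * k) mod 4 = 1" "Suc (Suc (4 * k)) mod 4 = 2" "Suc (Suc (Suc (4 * k))) mod 4 = 3" for k
    by presburger+
  have "coeff p0 k = 0" for k using c[of "4 * k"] P by simp
  moreover have "coeff p2 k = 0" for k using c[of "4 * k + 1"] P e1 e2 by simp
  moreover have "coeff p3 k = 0" for k using c[of "4 * k + 2"] P e1 e2 by simp
  moreover have "coeff p23 k = 0" for k using c[of "4 * k + 3"] P e1 e2 by simp
  ultimately show "P = 0" using P by (simp add: poly_eq_iff zero_prod_def)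
qed

locale mt = wmod +
  assumes v0_nz: "v0 \<noteq> 0" and gen_v0: "gen S act {v0} = S"
    and univ: "\<forall>(S'::'a::cvs set) act' u. is_rep S' act' \<and> u \<in> S' \<and> whitt_gen lam zeta act' u \<longrightarrow>
        (\<exists>f. hom S act S' act' f \<and> f v0 = u)"
begin

lemma A_inj0: "A q = 0 \<Longrightarrow> q = 0"
proof (induction "degree q" arbitrary: q rule: less_induct)
  case less
  show ?case
  proof (cases "degree q = 0")
    case True
    then have q: "q = [:coeff q 0:]" by (rule degree0_const)
    then have "coeff q 0 *\<^sub>C v0 = 0" using less.prems by (metis polyop_const v0_in)
    then have "coeff q 0 = 0" using v0_nz cscale_cancel by blast
    then show ?thesis using q by simp
  next
    case False
    let ?d = "pcompose q [:-2, 1:] - q"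
    have "A (mE aa q) = 0" using less.prems A_23[of q] by simp
    then have "aa *\<^sub>C A (pcompose q [:-2, 1:]) = 0" by (simp add: mE_def)
    then have "A (pcompose q [:-2, 1:]) = 0" using a_nz cscale_cancel by blast
    then have "A ?d = 0" using less.prems by simp
    moreover have "degree ?d < degree q" using False by (intro delta_degree) simp
    ultimately have "?d = 0" using less.hyps by blast
    then have "q = [:poly q 0:]" using periodic_const by simp
    then have "degree q = 0" by (metis degree_pCons_0)
    then show ?thesis using False by simp
  qed
qed

definition emb :: "quad \<Rightarrow> 'a" where "emb P = A (ilv P)"

lemma emb_add: "emb (P + Q) = emb P + emb Q"
  by (simp add: emb_def ilv_add)
lemma emb_qsc: "emb (qsc c P) = c *\<^sub>C emb P"
  by (simp add: emb_def ilv_qsc)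
lemma emb_diff: "emb (P - Q) = emb P - emb Q"
  by (simp add: emb_def ilv_diff)
lemma emb_zero[simp]: "emb 0 = 0"
  using emb_qsc[of 0 0] by simp
lemma emb_inj: "emb P = emb Q \<Longrightarrow> P = Q"
proof -
  assume "emb P = emb Q"
  then have "A (ilv (P - Q)) = 0" by (simp add: emb_def ilv_diff)
  then have "ilv (P - Q) = 0" by (rule A_inj0)
  then show "P = Q" using ilv_zero by fastforce
qed
lemma inj_emb: "inj emb"
  by (auto intro: injI emb_inj)

definition actm :: "idx \<Rightarrow> idx \<Rightarrow> 'a \<Rightarrow> 'a" where
  "actm i j x = emb (Tm i j (inv emb x))"

lemma actm_emb[simp]: "actm i j (emb P) = emb (Tm i j P)"
  by (simp add: actm_def inv_f_f[OF inj_emb])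

lemma model_rep: "is_rep (range emb) actm"
proof -
  have sub: "subspace_c (range emb)"
    unfolding subspace_c_def
  proof (intro conjI ballI allI)
    show "0 \<in> range emb" using emb_zero by (metis rangeI)
    fix x y assume "x \<in> range emb" "y \<in> range emb"
    then obtain P Q where "x = emb P" "y = emb Q" by blast
    then show "x + y \<in> range emb" using emb_add[of P Q] by (metis rangeI)
  next
    fix c x assume "x \<in> range emb"
    then obtain P where "x = emb P" by blast
    then show "c *\<^sub>C x \<in> range emb" using emb_qsc[of c P] by (metis rangeI)
  qed
  show ?thesis
    unfolding is_rep_def
  proof (intro conjI allI ballI sub)
    fix i j x assume "x \<in> range emb"
    then show "actm i j x \<in> range emb" by (auto simp: actm_def)
  next
    fix i j x y assume "x \<in> range emb" "y \<in> range emb"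
    then obtain P Q where "x = emb P" "y = emb Q" by auto
    then show "actm i j (x + y) = actm i j x + actm i j y"
      by (simp flip: emb_add add: TT_add)
  next
    fix i j c x assume "x \<in> range emb"
    then obtain P where "x = emb P" by auto
    then show "actm i j (c *\<^sub>C x) = c *\<^sub>C actm i j x"
      by (simp flip: emb_qsc add: TT_qsc)
  next
    fix i j k l x assume "x \<in> range emb"
    then obtain P where x: "x = emb P" by auto
    have "actm i j (actm k l x) - ssign i j k l *\<^sub>C actm k l (actm i j x) =
       emb (Tm i j (Tm k l P) - qsc (ssign i j k l) (Tm k l (Tm i j P)))"
      by (simp add: x emb_diff emb_qsc)
    also have "\<dots> = emb ((if j = k then Tm i l P else 0) - qsc (ssign i j k l) (if l = i then Tm k j P else 0))"
      using TT_bracket[OF a_nz] by simp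
    also have "\<dots> = (if j = k then actm i l x else 0) - ssign i j k l *\<^sub>C (if l = i then actm k j x else 0)"
      by (simp add: x emb_diff emb_qsc)
    finally show "actm i j (actm k l x) - ssign i j k l *\<^sub>C actm k l (actm i j x) =
        (if j = k then actm i l x else 0) - ssign i j k l *\<^sub>C (if l = i then actm k j x else 0)" .
  qed
qed

lemma emb_eq_iff[simp]: "emb X = emb Y \<longleftrightarrow> X = Y"
  using emb_inj by blast
lemma emb_eq_0[simp]: "emb X = 0 \<longleftrightarrow> X = 0"
  using emb_inj[of X 0] by auto

abbreviation "U0 \<equiv> ((1::complex poly), (0::complex poly), (0::complex poly), (0::complex poly))"

lemma wg_model: "whitt_gen lam zeta actm (emb U0)"
  unfolding whitt_gen_def H0_def using a_nz
  by (simp flip: emb_add emb_qsc emb_diff add: m_defs poly_ext_iff poly_pcompose zero_prod_def field_simps kp_def)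

interpretation M: rep "range emb" actm
  by (rule rep.intro, rule model_rep)

definition fm :: "'a \<Rightarrow> 'a" where
  "fm = (SOME f. hom S act (range emb) actm f \<and> f v0 = emb U0)"

lemma fm_prop: "hom S act (range emb) actm fm \<and> fm v0 = emb U0"
proof -
  have "\<exists>f. hom S act (range emb) actm f \<and> f v0 = emb U0"
    using univ model_rep wg_model by blast
  then show ?thesis unfolding fm_def by (rule someI_ex)
qed

lemma fm_in: "x \<in> S \<Longrightarrow> fm x \<in> range emb"
  using fm_prop by (auto simp: hom_def)
lemma fm_add: "x \<in> S \<Longrightarrow> y \<in> S \<Longrightarrow> fm (x + y) = fm x + fm y"
  using fm_prop by (auto simp: hom_def)
lemma fm_sc: "x \<in> S \<Longrightarrow> fm (c *\<^sub>C x) = c *\<^sub>C fm x"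
  using fm_prop by (auto simp: hom_def)
lemma fm_act: "x \<in> S \<Longrightarrow> fm (act i j x) = actm i j (fm x)"
  using fm_prop by (auto simp: hom_def)
lemma fm_v0: "fm v0 = emb U0"
  using fm_prop by auto
lemma fm_diff: "x \<in> S \<Longrightarrow> y \<in> S \<Longrightarrow> fm (x - y) = fm x - fm y"
  using fm_add[of "x - y" y] by (simp add: eq_diff_eq)
lemma fm_H0: "x \<in> S \<Longrightarrow> fm (H0 act x) = H0 actm (fm x)"
  by (simp add: H0_def fm_diff fm_act)

lemma fm_polyop: "x \<in> S \<Longrightarrow> fm (polyop act q x) = polyop actm q (fm x)"
proof (induction q)
  case 0
  have "fm 0 = fm 0 + fm 0" using fm_add[of 0 0] by simp
  then show ?case by simp
next
  case (pCons c q)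
  then show ?case using fm_in[OF pCons.prems]
    by (simp add: polyop_pCons M.polyop_pCons fm_add fm_sc fm_H0)
qed

lemma polyop_model: "polyop actm q (emb U0) = emb (q, 0, 0, 0)"
proof (induction q)
  case 0 then show ?case by (simp add: zero_prod_def)
next
  case (pCons c q)
  have "polyop actm (pCons c q) (emb U0) = c *\<^sub>C emb U0 + H0 actm (emb (q, 0, 0, 0))"
    using pCons by (simp add: M.polyop_pCons)
  also have "\<dots> = emb (qsc c U0 + (Tm I2 I2 (q, 0, 0, 0) - Tm I3 I3 (q, 0, 0, 0)))"
    by (simp add: H0_def emb_add emb_qsc emb_diff del: TT.simps qsc.simps)
  also have "qsc c U0 + (Tm I2 I2 (q, 0, 0, 0) - Tm I3 I3 (q, 0, 0, 0)) = (pCons c q, 0, 0, 0)"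
    by (simp add: m_defs poly_ext_iff algebra_simps)
  finally show ?case .
qed

lemma fm_A: "fm (A p) = emb (p, 0, 0, 0)"
  by (simp add: fm_polyop fm_v0 polyop_model)

lemma fm_Phi: "fm (Phi P) = emb P"
proof -
  obtain p0 p2 p3 p23 where P: "P = (p0, p2, p3, p23)" by (cases P) auto
  have "fm (Phi P) = emb (p0, 0, 0, 0) + emb (Tm I2 I1 (p2, 0, 0, 0)) + emb (Tm I3 I1 (p3, 0, 0, 0))
      + emb (Tm I2 I1 (Tm I3 I1 (p23, 0, 0, 0)))"
    unfolding P Phi_simp by (simp add: fm_add fm_act fm_A del: TT.simps)
  also have "\<dots> = emb P"
    unfolding P by (simp flip: emb_add)
  finally show ?thesis .
qed

lemma Phi_inj: "Phi P = Phi Q \<Longrightarrow> P = Q"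
  using fm_Phi by (metis emb_eq_iff)

lemma S_Phi: "x \<in> S \<Longrightarrow> \<exists>P. x = Phi P"
proof -
  assume x: "x \<in> S"
  have sm: "submodule S act (range Phi)"
    unfolding submodule_def subspace_c_def
  proof (intro conjI ballI allI)
    show "range Phi \<subseteq> S" by auto
    show "0 \<in> range Phi" by (metis Phi_zero rangeI)
  next
    fix y z assume "y \<in> range Phi" "z \<in> range Phi"
    then obtain P Q where "y = Phi P" "z = Phi Q" by blast
    then show "y + z \<in> range Phi" using Phi_add[of P Q] by (metis rangeI)
  next
    fix c y assume "y \<in> range Phi"
    then obtain P where "y = Phi P" by blast
    then show "c *\<^sub>C y \<in> range Phi" using Phi_qsc[of c P] by (metis rangeI)
  next
    fix i j y assume "y \<in> range Phi"
    then obtain P where "y = Phi P" by blast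
    then show "act i j y \<in> range Phi" using Phi_equiv[of i j P] by (metis rangeI)
  qed
  have "v0 \<in> range Phi" using Phi_v0 by (metis rangeI)
  then have "gen S act {v0} \<subseteq> range Phi" using sm unfolding gen_def by blast
  then show ?thesis using x gen_v0 by blast
qed

end

lemma qsc_neg: "qsc (-1) P = - P"
  by (cases P) simp

lemma pc1[simp]: "pcompose (1::complex poly) q = 1"
  by (metis one_pCons pcompose_const)

context mt
begin

definition qclosed :: "quad set \<Rightarrow> bool" where
  "qclosed Q \<longleftrightarrow> 0 \<in> Q \<and> (\<forall>P\<in>Q. \<forall>P'\<in>Q. P + P' \<in> Q) \<and> (\<forall>c. \<forall>P\<in>Q. qsc c P \<in> Q) \<and>
     (\<forall>i j. \<forall>P\<in>Q. Tm i j P \<in> Q)"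

lemma qc_add: "qclosed Q \<Longrightarrow> P \<in> Q \<Longrightarrow> P' \<in> Q \<Longrightarrow> P + P' \<in> Q"
  by (simp add: qclosed_def)
lemma qc_sc: "qclosed Q \<Longrightarrow> P \<in> Q \<Longrightarrow> qsc c P \<in> Q"
  by (simp add: qclosed_def)
lemma qc_T: "qclosed Q \<Longrightarrow> P \<in> Q \<Longrightarrow> Tm i j P \<in> Q"
  by (simp add: qclosed_def)
lemma qc_0: "qclosed Q \<Longrightarrow> 0 \<in> Q"
  by (simp add: qclosed_def)
lemma qc_neg: "qclosed Q \<Longrightarrow> P \<in> Q \<Longrightarrow> - P \<in> Q"
  using qc_sc[of Q P "-1"] by (simp add: qsc_neg)
lemma qc_diff: "qclosed Q \<Longrightarrow> P \<in> Q \<Longrightarrow> P' \<in> Q \<Longrightarrow> P - P' \<in> Q"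
  using qc_add[of Q P "- P'"] qc_neg[of Q P'] by simp

lemma qclosed_pre: assumes "submodule S act N1" shows "qclosed {P. Phi P \<in> N1}"
proof -
  have "Phi (Tm i j P) \<in> N1" if "Phi P \<in> N1" for i j P
  proof -
    have "act i j (Phi P) \<in> N1" using assms that by (simp add: submodule_def)
    then show ?thesis by (simp only: Phi_equiv)
  qed
  then show ?thesis using assms unfolding qclosed_def submodule_def subspace_c_def
    by (auto simp: Phi_add Phi_qsc)
qed

lemma poly_gen:
  assumes Q: "qclosed Q" and e1: "e 1 \<in> Q" and e0: "e 0 = 0"
    and ep: "\<And>c r. e (pCons c r) = qsc c (e 1) + (Tm I2 I2 (e r) - Tm I3 I3 (e r))"
  shows "e r \<in> Q"
proof (induction r)
  case 0 then show ?case using e0 qc_0[OF Q] by simp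
next
  case (pCons c r)
  then show ?case unfolding ep using Q e1 by (intro qc_add qc_sc qc_diff qc_T) auto
qed

lemma DL:
  assumes Q: "qclosed Q"
    and ed: "\<And>p q. e (p - q) = e p - e q" and es: "\<And>c p. e (smult c p) = qsc c (e p)"
    and e23: "\<And>r. Tm I2 I3 (e r) = qsc aa (e (pcompose r [:-2, 1:]))"
  shows "r \<noteq> 0 \<Longrightarrow> e r \<in> Q \<Longrightarrow> e 1 \<in> Q"
proof (induction "degree r" arbitrary: r rule: less_induct)
  case less
  show ?case
  proof (cases "degree r = 0")
    case True
    have r: "r = smult (coeff r 0) 1"
    proof -
      have "r = [:coeff r 0:]" using True by (rule degree0_const)
      then show ?thesis by simp
    qed
    then have c0: "coeff r 0 \<noteq> 0" using less.prems by auto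
    have "qsc (1 / coeff r 0) (e r) \<in> Q" using less.prems Q by (intro qc_sc)
    moreover have "qsc (1 / coeff r 0) (e r) = e 1"
      using c0 by (subst r) (simp only: es qsc_qsc, simp)
    ultimately show ?thesis by simp
  next
    case False
    let ?d = "pcompose r [:-2, 1:] - r"
    have "qsc (1 / aa) (Tm I2 I3 (e r)) = e (pcompose r [:-2, 1:])"
      unfolding e23 qsc_qsc using a_nz by simp
    then have "e ?d = qsc (1 / aa) (Tm I2 I3 (e r)) - e r"
      by (simp only: ed)
    then have "e ?d \<in> Q" using less.prems Q by (auto intro!: qc_diff qc_sc qc_T)
    moreover have "degree ?d < degree r" using False by (intro delta_degree) simp
    moreover have "?d \<noteq> 0"
    proof
      assume "?d = 0"
      then have "r = [:poly r 0:]" using periodic_const by simp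
      then have "degree r = 0" by (metis degree_pCons_0)
      then show False using False by simp
    qed
    ultimately show ?thesis using less.hyps by blast
  qed
qed

end

locale mta = mt +
  assumes katyp: "kp = (2 - 2 * (l1 + ss / 2))^2 - 2 * (2 - 2 * (l1 + ss / 2))"
begin

abbreviation "uu \<equiv> 2 - 2 * (l1 + ss / 2)"

definition elem :: "complex poly \<Rightarrow> quad" where
  "elem r = (0, pcompose r [:1, 1:] * [:uu, 1:], smult (2 * aa) (pcompose r [:-1, 1:]), 0)"
definition d4 :: "complex poly \<Rightarrow> quad" where
  "d4 s = (0, 0, 0, s)"
definition W0 :: quad where "W0 = elem 1"
definition Z :: "quad set" where "Z = {elem r + d4 s | r s. True}"

lemma W0_eq: "W0 = (0, [:uu, 1:], [:2 * aa:], 0)"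
  by (simp add: W0_def elem_def poly_ext_iff poly_pcompose)

lemma elem_add: "elem (r + r') = elem r + elem r'"
  by (simp add: elem_def poly_ext_iff poly_pcompose field_simps)
lemma elem_diff: "elem (r - r') = elem r - elem r'"
  by (simp add: elem_def poly_ext_iff poly_pcompose field_simps)
lemma elem_smult: "elem (smult c r) = qsc c (elem r)"
  by (simp add: elem_def poly_ext_iff poly_pcompose field_simps)
lemma elem_0[simp]: "elem 0 = 0"
  by (simp add: elem_def zero_prod_def)
lemma d4_add: "d4 (s + s') = d4 s + d4 s'"
  by (simp add: d4_def)
lemma d4_smult: "d4 (smult c s) = qsc c (d4 s)"
  by (simp add: d4_def)
lemma d4_0[simp]: "d4 0 = 0"
  by (simp add: d4_def zero_prod_def)

lemma Z_intro: "elem r + d4 s \<in> Z"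
  by (auto simp: Z_def)
lemma Z_elem: "elem r \<in> Z"
  using Z_intro[of r 0] by simp
lemma Z_d4: "d4 s \<in> Z"
  using Z_intro[of 0 s] by simp
lemma Z_0: "0 \<in> Z"
  using Z_elem[of 0] by simp
lemma Z_add: "P \<in> Z \<Longrightarrow> P' \<in> Z \<Longrightarrow> P + P' \<in> Z"
proof -
  assume "P \<in> Z" "P' \<in> Z"
  then obtain r s r' s' where "P = elem r + d4 s" "P' = elem r' + d4 s'" by (auto simp: Z_def)
  then have "P + P' = elem (r + r') + d4 (s + s')" by (simp add: elem_add d4_add algebra_simps)
  then show ?thesis using Z_intro by simp
qed
lemma Z_qsc: "P \<in> Z \<Longrightarrow> qsc c P \<in> Z"
proof -
  assume "P \<in> Z"
  then obtain r s where "P = elem r + d4 s" by (auto simp: Z_def)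
  then have "qsc c P = elem (smult c r) + d4 (smult c s)" by (simp add: elem_smult d4_smult qsc_add)
  then show ?thesis using Z_intro by simp
qed

lemmas pe = m_defs poly_ext_iff poly_pcompose elem_def d4_def

lemma T11e: "Tm I1 I1 (elem r) = elem (smult (l1 - 1) r)"
  using a_nz by (simp add: pe katyp zero_prod_def; auto simp: field_simps power2_eq_square algebra_simps)
lemma T22e: "Tm I2 I2 (elem r) = elem (r * [:(ss + 1) / 2, 1 / 2:])"
  using a_nz by (simp add: pe katyp zero_prod_def; auto simp: field_simps power2_eq_square algebra_simps)
lemma T33e: "Tm I3 I3 (elem r) = elem (r * [:(ss + 1) / 2, - 1 / 2:])"
  using a_nz by (simp add: pe katyp zero_prod_def; auto simp: field_simps power2_eq_square algebra_simps)
lemma T23e: "Tm I2 I3 (elem r) = qsc aa (elem (pcompose r [:-2, 1:]))"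
  using a_nz by (simp add: pe katyp zero_prod_def; auto simp: field_simps power2_eq_square algebra_simps)
lemma T32e: "Tm I3 I2 (elem r) = elem (pcompose r [:2, 1:] * smult (1 / (4 * aa)) [:uu^2 - 1, -2, -1:])"
  using a_nz by (simp add: pe katyp zero_prod_def; auto simp: field_simps power2_eq_square algebra_simps)
lemma T21e: "Tm I2 I1 (elem r) = d4 (smult (2 * aa) (pcompose r [:-1, 1:]))"
  using a_nz by (simp add: pe katyp zero_prod_def; auto simp: field_simps power2_eq_square algebra_simps)
lemma T31e: "Tm I3 I1 (elem r) = d4 (- (pcompose r [:1, 1:] * [:uu, 1:]))"
  using a_nz by (simp add: pe katyp zero_prod_def; auto simp: field_simps power2_eq_square algebra_simps)
lemma T12e: "Tm I1 I2 (elem r) = 0"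
  using a_nz by (simp add: pe katyp zero_prod_def; auto simp: field_simps power2_eq_square algebra_simps)
lemma T13e: "Tm I1 I3 (elem r) = 0"
  using a_nz by (simp add: pe katyp zero_prod_def; auto simp: field_simps power2_eq_square algebra_simps)

lemma T11d: "Tm I1 I1 (d4 s) = d4 (smult (l1 - 2) s)"
  using a_nz by (simp add: pe katyp zero_prod_def; auto simp: field_simps power2_eq_square algebra_simps)
lemma T22d: "Tm I2 I2 (d4 s) = d4 (mA ss s + s)"
  using a_nz by (simp add: pe katyp zero_prod_def; auto simp: field_simps power2_eq_square algebra_simps)
lemma T33d: "Tm I3 I3 (d4 s) = d4 (mB ss s + s)"
  using a_nz by (simp add: pe katyp zero_prod_def; auto simp: field_simps power2_eq_square algebra_simps)
lemma T23d: "Tm I2 I3 (d4 s) = d4 (mE aa s)"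
  using a_nz by (simp add: pe katyp zero_prod_def; auto simp: field_simps power2_eq_square algebra_simps)
lemma T32d: "Tm I3 I2 (d4 s) = d4 (mF kp aa s)"
  using a_nz by (simp add: pe katyp zero_prod_def; auto simp: field_simps power2_eq_square algebra_simps)
lemma T21d: "Tm I2 I1 (d4 s) = 0"
  using a_nz by (simp add: pe katyp zero_prod_def; auto simp: field_simps power2_eq_square algebra_simps)
lemma T31d: "Tm I3 I1 (d4 s) = 0"
  using a_nz by (simp add: pe katyp zero_prod_def; auto simp: field_simps power2_eq_square algebra_simps)
lemma T12d: "Tm I1 I2 (d4 s) = elem (smult (1 / (4 * aa)) (pcompose s [:1, 1:] * [:1 - uu, 1:]))"
  using a_nz by (simp add: pe katyp zero_prod_def; auto simp: field_simps power2_eq_square algebra_simps)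
lemma T13d: "Tm I1 I3 (d4 s) = elem (smult (1 / 2) (pcompose s [:-1, 1:]))"
  using a_nz by (simp add: pe katyp zero_prod_def; auto simp: field_simps power2_eq_square algebra_simps)

lemma Z_T: assumes "P \<in> Z" shows "Tm i j P \<in> Z"
proof -
  obtain r s where P: "P = elem r + d4 s" using assms by (auto simp: Z_def)
  have e: "Tm i j P = Tm i j (elem r) + Tm i j (d4 s)" unfolding P by (rule TT_add)
  have "Tm i j (elem r) \<in> Z"
    by (cases i; cases j) (simp_all only: T11e T22e T33e T23e T32e T21e T31e T12e T13e Z_elem Z_d4 Z_0 Z_qsc)
  moreover have "Tm i j (d4 s) \<in> Z"
    by (cases i; cases j) (simp_all only: T11d T22d T33d T23d T32d T21d T31d T12d T13d Z_elem Z_d4 Z_0 Z_qsc)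
  ultimately show ?thesis unfolding e by (rule Z_add)
qed

lemma PZ_sub: "submodule S act (Phi ` Z)"
  unfolding submodule_def subspace_c_def
proof (intro conjI ballI allI)
  show "Phi ` Z \<subseteq> S" by auto
  show "0 \<in> Phi ` Z" using Z_0 Phi_zero by (metis image_eqI)
next
  fix x y assume "x \<in> Phi ` Z" "y \<in> Phi ` Z"
  then obtain P P' where "x = Phi P" "y = Phi P'" "P \<in> Z" "P' \<in> Z" by blast
  then show "x + y \<in> Phi ` Z" using Phi_add[of P P'] Z_add by (metis image_eqI)
next
  fix c x assume "x \<in> Phi ` Z"
  then obtain P where "x = Phi P" "P \<in> Z" by blast
  then show "c *\<^sub>C x \<in> Phi ` Z" using Phi_qsc[of c P] Z_qsc by (metis image_eqI)
next
  fix i j x assume "x \<in> Phi ` Z"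
  then obtain P where "x = Phi P" "P \<in> Z" by blast
  then show "act i j x \<in> Phi ` Z" using Phi_equiv[of i j P] Z_T by (metis image_eqI)
qed

lemma elem_pCons: "elem (pCons c r) = qsc c (elem 1) + (Tm I2 I2 (elem r) - Tm I3 I3 (elem r))"
  by (simp add: pe field_simps)
lemma d4_pCons: "d4 (pCons c r) = qsc c (d4 1) + (Tm I2 I2 (d4 r) - Tm I3 I3 (d4 r))"
  by (simp add: pe field_simps)

lemma Z_in_Q: assumes Q: "qclosed Q" and W: "W0 \<in> Q" shows "Z \<subseteq> Q"
proof
  fix P assume "P \<in> Z"
  then obtain r s where P: "P = elem r + d4 s" by (auto simp: Z_def)
  have er: "elem r \<in> Q"
    by (rule poly_gen[OF Q, of elem]) (use W in \<open>simp_all add: W0_def elem_pCons\<close>)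
  have "Tm I2 I1 W0 = qsc (2 * aa) (d4 1)" by (simp add: W0_def T21e d4_def)
  then have "qsc (1 / (2 * aa)) (Tm I2 I1 W0) = d4 1" using a_nz by (simp add: qsc_qsc)
  moreover have "qsc (1 / (2 * aa)) (Tm I2 I1 W0) \<in> Q" using Q W by (intro qc_sc qc_T)
  ultimately have d1: "d4 1 \<in> Q" by simp
  have ds: "d4 s \<in> Q"
    by (rule poly_gen[OF Q, of d4]) (use d1 in \<open>simp_all add: d4_pCons\<close>)
  show "P \<in> Q" unfolding P using Q er ds by (rule qc_add)
qed

end

context rep
begin

lemma gen_min: "submodule S act N \<Longrightarrow> X \<subseteq> N \<Longrightarrow> gen S act X \<subseteq> N"
  unfolding gen_def by blast
lemma gen_sup: "X \<subseteq> gen S act X"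
  unfolding gen_def by blast
lemma S_submodule: "submodule S act S"
  using isrep by (simp add: submodule_def is_rep_def)
lemma gen_sub: assumes "X \<subseteq> S" shows "submodule S act (gen S act X)"
proof -
  have fam: "S \<in> {N. submodule S act N \<and> X \<subseteq> N}" using S_submodule assms by simp
  show ?thesis
    unfolding submodule_def subspace_c_def
  proof (intro conjI ballI allI)
    show "gen S act X \<subseteq> S" unfolding gen_def using fam by blast
    show "0 \<in> gen S act X" unfolding gen_def by (auto simp: submodule_def subspace_c_def)
  next
    fix x y assume "x \<in> gen S act X" "y \<in> gen S act X"
    then show "x + y \<in> gen S act X" unfolding gen_def by (auto simp: submodule_def subspace_c_def)
  next
    fix c x assume "x \<in> gen S act X"
    then show "c *\<^sub>C x \<in> gen S act X" unfolding gen_def by (auto simp: submodule_def subspace_c_def)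
  next
    fix i j x assume "x \<in> gen S act X"
    then show "act i j x \<in> gen S act X" unfolding gen_def by (auto simp: submodule_def)
  qed
qed

end

context mta
begin

lemma gen_eq: assumes B: "B \<noteq> 0" shows "gen S act {Phi (qsc B W0)} = Phi ` Z"
proof
  have "qsc B W0 \<in> Z" by (simp add: W0_def elem_smult[symmetric] Z_elem)
  then show "gen S act {Phi (qsc B W0)} \<subseteq> Phi ` Z" using PZ_sub by (intro gen_min) auto
next
  let ?N = "gen S act {Phi (qsc B W0)}"
  have sm: "submodule S act ?N" by (rule gen_sub) simp
  have Q: "qclosed {P. Phi P \<in> ?N}" using sm by (rule qclosed_pre)
  have w: "qsc B W0 \<in> {P. Phi P \<in> ?N}" using gen_sup by auto
  have "qsc (1 / B) (qsc B W0) \<in> {P. Phi P \<in> ?N}" by (rule qc_sc[OF Q w])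
  then have "W0 \<in> {P. Phi P \<in> ?N}" using B by (simp add: qsc_qsc)
  then have "Z \<subseteq> {P. Phi P \<in> ?N}" using Q Z_in_Q by blast
  then show "Phi ` Z \<subseteq> ?N" by auto
qed

lemma KL: assumes Q: "qclosed Q" and p: "p \<noteq> 0" "(p, 0, 0, 0) \<in> Q" shows "U0 \<in> Q"
proof -
  let ?e = "\<lambda>p::complex poly. (p, (0::complex poly), (0::complex poly), (0::complex poly))"
  have "?e 1 \<in> Q"
  proof (rule DL[OF Q, of ?e p])
    show "?e (p - q) = ?e p - ?e q" for p q by (simp add: zero_prod_def)
    show "?e (smult c p) = qsc c (?e p)" for c p by simp
    show "Tm I2 I3 (?e r) = qsc aa (?e (pcompose r [:-2, 1:]))" for r by (simp add: m_defs)
  qed (use p in auto)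
  then show ?thesis by simp
qed

lemma U0_notin_Z: "U0 \<notin> Z"
  by (auto simp: Z_def elem_def d4_def)

lemma W0_nz: "W0 \<noteq> 0"
proof
  assume "W0 = 0"
  moreover have "fst (snd (snd W0)) = [:2 * aa:]" by (simp add: W0_eq)
  ultimately show False using a_nz by simp
qed

lemma maximal: "maximal_submodule S act (Phi ` Z)"
  unfolding maximal_submodule_def
proof (intro conjI allI impI)
  show "submodule S act (Phi ` Z)" by (rule PZ_sub)
  show "Phi ` Z \<noteq> S"
  proof
    assume "Phi ` Z = S"
    then have "Phi U0 \<in> Phi ` Z" using Phi_in by blast
    then obtain P where "P \<in> Z" "Phi U0 = Phi P" by blast
    then show False using Phi_inj U0_notin_Z by blast
  qed
next
  fix N' assume h: "submodule S act N' \<and> Phi ` Z \<subseteq> N'"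
  then have sm: "submodule S act N'" and sup: "Phi ` Z \<subseteq> N'" by auto
  let ?Q = "{P. Phi P \<in> N'}"
  have Q: "qclosed ?Q" using sm by (rule qclosed_pre)
  have ZQ: "Z \<subseteq> ?Q" using sup by auto
  have toS: "N' = S" if "U0 \<in> ?Q"
  proof -
    have "v0 \<in> N'" using that Phi_v0 by simp
    then have "gen S act {v0} \<subseteq> N'" using sm by (intro gen_min) auto
    then show ?thesis using gen_v0 sm by (auto simp: submodule_def)
  qed
  show "N' = Phi ` Z \<or> N' = S"
  proof (cases "N' = Phi ` Z")
    case True then show ?thesis by simp
  next
    case ne: False
    have "N' = S"
    proof -
    from ne obtain x where x: "x \<in> N'" "x \<notin> Phi ` Z" using sup by blast
    then have "x \<in> S" using sm by (auto simp: submodule_def)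
    then obtain P where xP: "x = Phi P" using S_Phi by blast
    obtain p0 p2 p3 p23 where P: "P = (p0, p2, p3, p23)" by (cases P) auto
    have PQ: "P \<in> ?Q" using x xP by simp
    have PZ: "P \<notin> Z" using x xP by auto
    let ?X1 = "Tm I1 I1 P - qsc (l1 - 1) P"
    have X1: "?X1 \<in> ?Q" by (rule qc_diff[OF Q qc_T[OF Q PQ] qc_sc[OF Q PQ]])
    have X2: "Tm I1 I1 ?X1 - qsc (l1 - 2) ?X1 \<in> ?Q" by (rule qc_diff[OF Q qc_T[OF Q X1] qc_sc[OF Q X1]])
    have "Tm I1 I1 ?X1 - qsc (l1 - 2) ?X1 = qsc 2 (p0, 0, 0, 0)"
      unfolding P by (simp add: zero_prod_def poly_ext_iff algebra_simps)
    then have "qsc (1/2) (qsc 2 (p0, 0, 0, 0)) \<in> ?Q" using Q X2 by (metis qc_sc)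
    then have p0Q: "(p0, 0, 0, 0) \<in> ?Q" by (simp add: qsc_qsc)
    show "N' = S"
    proof (cases "p0 = 0")
      case False
      then show ?thesis using KL[OF Q False p0Q] toS by blast
    next
      case True
      have dQ: "d4 p23 \<in> ?Q" using ZQ Z_d4 by blast
      have P1Q: "(0, p2, p3, 0) \<in> ?Q"
      proof -
        have "P - d4 p23 \<in> ?Q" using Q PQ dQ by (rule qc_diff)
        moreover have "P - d4 p23 = (0, p2, p3, 0)" using True by (simp add: P d4_def)
        ultimately show ?thesis by simp
      qed
      let ?e = "mE aa p2 + smult l1 p3 + mB ss p3"
      have "Tm I1 I3 (0, p2, p3, 0) = (?e, 0, 0, 0)" by (simp add: m_defs)
      then have eQ: "(?e, 0, 0, 0) \<in> ?Q" using Q P1Q by (metis qc_T)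
      show ?thesis
      proof (cases "?e = 0")
        case False
        then show ?thesis using KL[OF Q False eQ] toS by blast
      next
        case e0: True
        let ?r = "smult (1 / (2 * aa)) (pcompose p3 [:1, 1:])"
        have ex: "poly ?e (y + 2) = 0" for y using e0 by simp
        have p2e: "poly p2 y = (y + uu) * poly p3 (y + 2) / (2 * aa)" for y
        proof -
          have "aa * poly p2 y + l1 * poly p3 (y + 2) + (ss / 2 - (y + 2) / 2) * poly p3 (y + 2) = 0"
            using ex[of y] by (simp add: m_defs poly_pcompose algebra_simps)
          then show ?thesis using a_nz by (simp add: field_simps)
        qed
        have eq: "(0, p2, p3, 0) = elem ?r"
          unfolding elem_def using a_nz by (simp add: poly_ext_iff poly_pcompose p2e field_simps)
        have "P = (0, p2, p3, 0) + d4 p23" using True by (simp add: P d4_def)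
        then have "P = elem ?r + d4 p23" by (simp only: eq)
        then have "P \<in> Z" using Z_intro by simp
        then show ?thesis using PZ by simp
      qed
    qed
  qed
    then show ?thesis by simp
  qed
qed

lemma W0_Z: "W0 \<in> Z"
  by (simp add: W0_def Z_elem)

lemma simple: "simple_mod S act (Phi ` Z)"
  unfolding simple_mod_def
proof (intro conjI allI impI)
  show "submodule S act (Phi ` Z)" by (rule PZ_sub)
  show "Phi ` Z \<noteq> {0}"
  proof
    assume "Phi ` Z = {0}"
    then have "Phi W0 = Phi 0" using W0_Z by auto
    then show False using Phi_inj W0_nz by blast
  qed
next
  fix N' assume h: "submodule S act N' \<and> N' \<subseteq> Phi ` Z"
  then have sm: "submodule S act N'" and sub: "N' \<subseteq> Phi ` Z" by auto
  show "N' = {0} \<or> N' = Phi ` Z"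
  proof (cases "N' = {0}")
    case True then show ?thesis by simp
  next
    case False
    have "0 \<in> N'" using sm by (simp add: submodule_def subspace_c_def)
    then obtain x where x: "x \<in> N'" "x \<noteq> 0" using False by blast
    then obtain P where xP: "x = Phi P" and PZ: "P \<in> Z" using sub by blast
    then obtain r s where P: "P = elem r + d4 s" by (auto simp: Z_def)
    let ?Q = "{P. Phi P \<in> N'}"
    have Q: "qclosed ?Q" using sm by (rule qclosed_pre)
    have PQ: "P \<in> ?Q" using x xP by simp
    have "Tm I1 I1 P - qsc (l1 - 2) P = elem r"
      unfolding P by (simp add: pe zero_prod_def; auto simp: field_simps algebra_simps)
    moreover have "Tm I1 I1 P - qsc (l1 - 2) P \<in> ?Q" by (rule qc_diff[OF Q qc_T[OF Q PQ] qc_sc[OF Q PQ]])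
    ultimately have rQ: "elem r \<in> ?Q" by simp
    have DLe: "r' \<noteq> 0 \<Longrightarrow> elem r' \<in> ?Q \<Longrightarrow> elem 1 \<in> ?Q" for r'
      by (rule DL[OF Q]) (simp_all add: elem_diff elem_smult T23e)
    have W0Q: "W0 \<in> ?Q"
    proof (cases "r = 0")
      case False
      then show ?thesis using DLe rQ by (simp add: W0_def)
    next
      case True
      then have s0: "s \<noteq> 0" using x xP P by auto
      have sQ: "d4 s \<in> ?Q"
      proof -
        have "P - elem r \<in> ?Q" using Q PQ rQ by (rule qc_diff)
        then show ?thesis using P by simp
      qed
      let ?r = "smult (1 / 2) (pcompose s [:-1, 1:])"
      have rQ2: "elem ?r \<in> ?Q" using qc_T[OF Q sQ, of I1 I3] by (simp only: T13d)
      have rnz: "?r \<noteq> 0" using s0 pcompose_eq_0[of s "[:-1, 1:]"] by auto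
      show ?thesis using DLe[OF rnz rQ2] by (simp add: W0_def)
    qed
    then have "Phi (qsc 1 W0) \<in> N'" by simp
    then have "gen S act {Phi (qsc 1 W0)} \<subseteq> N'" using sm by (intro gen_min) auto
    then have "Phi ` Z \<subseteq> N'" using gen_eq[of 1] by simp
    then show ?thesis using sub by auto
  qed
qed

lemma whitt_Phi:
  assumes "Tm I1 I2 X = 0" "Tm I1 I3 X = 0" "Tm I2 I3 X = qsc (zeta I2 I3) X" "Tm I1 I1 X = qsc (mu I1) X"
    "Tm I2 I2 X + Tm I3 I3 X = qsc (mu I2 + mu I3) X"
    "Tm I2 I2 (Tm I2 I2 X - Tm I3 I3 X) - Tm I3 I3 (Tm I2 I2 X - Tm I3 I3 X) + qsc 2 (Tm I2 I3 (Tm I3 I2 X))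
       + qsc 2 (Tm I3 I2 (qsc (zeta I2 I3) X)) = qsc ((mu I2 - mu I3)^2 + 2 * (mu I2 - mu I3)) X"
  shows "whitt_gen mu zeta act (Phi X)"
  unfolding whitt_gen_def H0_def
  by (simp only: Phi_equiv Phi_diff[symmetric] Phi_add[symmetric] Phi_qsc[symmetric] assms Phi_zero)

lemma whitt_W0:
  assumes "mu I1 = l1 - 1" "mu I2 + mu I3 = ss + 1" "(mu I2 - mu I3)^2 + 2 * (mu I2 - mu I3) = uu^2 - 1"
  shows "whitt_gen mu zeta act (Phi (qsc B W0))"
proof (rule whitt_Phi)
  show "Tm I1 I2 (qsc B W0) = 0" using a_nz
    by (simp add: W0_eq m_defs poly_ext_iff poly_pcompose katyp zero_prod_def; auto simp: field_simps power2_eq_square algebra_simps)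
  show "Tm I1 I3 (qsc B W0) = 0" using a_nz
    by (simp add: W0_eq m_defs poly_ext_iff poly_pcompose katyp zero_prod_def; auto simp: field_simps power2_eq_square algebra_simps)
  show "Tm I2 I3 (qsc B W0) = qsc (zeta I2 I3) (qsc B W0)" using a_nz
    by (simp add: W0_eq m_defs poly_ext_iff poly_pcompose katyp zero_prod_def; auto simp: field_simps power2_eq_square algebra_simps)
  show "Tm I1 I1 (qsc B W0) = qsc (mu I1) (qsc B W0)" using a_nz assms
    by (simp add: W0_eq m_defs poly_ext_iff poly_pcompose katyp zero_prod_def; auto simp: field_simps power2_eq_square algebra_simps)
  show "Tm I2 I2 (qsc B W0) + Tm I3 I3 (qsc B W0) = qsc (mu I2 + mu I3) (qsc B W0)" using a_nz assms
    by (simp add: W0_eq m_defs poly_ext_iff poly_pcompose katyp zero_prod_def; auto simp: field_simps power2_eq_square algebra_simps)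
  show "Tm I2 I2 (Tm I2 I2 (qsc B W0) - Tm I3 I3 (qsc B W0)) - Tm I3 I3 (Tm I2 I2 (qsc B W0) - Tm I3 I3 (qsc B W0)) +
    qsc 2 (Tm I2 I3 (Tm I3 I2 (qsc B W0))) + qsc 2 (Tm I3 I2 (qsc (zeta I2 I3) (qsc B W0))) =
    qsc ((mu I2 - mu I3)\<^sup>2 + 2 * (mu I2 - mu I3)) (qsc B W0)" using a_nz assms(3)
    by (simp add: W0_eq m_defs poly_ext_iff poly_pcompose katyp zero_prod_def; auto simp: field_simps power2_eq_square algebra_simps)
qed

end

lemma atyp_kp:
  assumes "atypical lam"
  shows "(lam I2 - lam I3)^2 + 2 * (lam I2 - lam I3) =
    (2 - 2 * (lam I1 + (lam I2 + lam I3) / 2))^2 - 2 * (2 - 2 * (lam I1 + (lam I2 + lam I3) / 2))"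
proof -
  from assms obtain b where b: "b \<in> odd_roots" "bform (lam + rho) b = 0" by (auto simp: atypical_def)
  have bv: "(b I1 = 1 \<and> b I2 = -1 \<and> b I3 = 0) \<or> (b I1 = -1 \<and> b I2 = 1 \<and> b I3 = 0) \<or>
     (b I1 = 1 \<and> b I2 = 0 \<and> b I3 = -1) \<or> (b I1 = -1 \<and> b I2 = 0 \<and> b I3 = 1)"
    using b(1) unfolding odd_roots_def by (auto simp: eps_def)
  have pe: "bform (lam + rho) b = (lam I1 - 1) * b I1 - (lam I2 + 1) * b I2 - lam I3 * b I3"
    by (simp add: bform_def rho_def eps_def)
  have "lam I1 + lam I2 = 0 \<or> lam I1 + lam I3 = 1"
    using bv b(2) unfolding pe
    apply (elim disjE conjE)
       apply (rule disjI1, algebra)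
      apply (rule disjI1, algebra)
     apply (rule disjI2, algebra)
    apply (rule disjI2, algebra)
    done
  then show ?thesis
  proof
    assume "lam I1 + lam I2 = 0"
    then have "lam I1 = - lam I2" by (simp add: eq_neg_iff_add_eq_0)
    then show ?thesis by (simp add: power2_eq_square field_simps; algebra)
  next
    assume "lam I1 + lam I3 = 1"
    then have "lam I1 = 1 - lam I3" by (simp add: eq_diff_eq)
    then show ?thesis by (simp add: power2_eq_square field_simps; algebra)
  qed
qed

lemma weights:
  assumes "lamu \<in> W_orbit_dot lam" "alpha \<in> pos_odd_roots" "bform (lamu + rho) alpha = 0"
  shows "(lamu - alpha) I1 = lam I1 - 1"
    "(lamu - alpha) I2 + (lamu - alpha) I3 = lam I2 + lam I3 + 1"
    "((lamu - alpha) I2 - (lamu - alpha) I3)^2 + 2 * ((lamu - alpha) I2 - (lamu - alpha) I3) =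
       (2 - 2 * (lam I1 + (lam I2 + lam I3) / 2))^2 - 1"
proof -
  have lu: "lamu I1 = lam I1 \<and> lamu I2 + lamu I3 = lam I2 + lam I3"
    using assms(1) by (auto simp: W_orbit_dot_def srefl_def rho0_def eps_def)
  have al: "(alpha I1 = 1 \<and> alpha I2 = -1 \<and> alpha I3 = 0) \<or> (alpha I1 = 1 \<and> alpha I2 = 0 \<and> alpha I3 = -1)"
    using assms(2) by (auto simp: pos_odd_roots_def eps_def)
  show "(lamu - alpha) I1 = lam I1 - 1" using lu al by auto
  show "(lamu - alpha) I2 + (lamu - alpha) I3 = lam I2 + lam I3 + 1" using lu al by auto
  have pe: "bform (lamu + rho) alpha = (lamu I1 - 1) * alpha I1 - (lamu I2 + 1) * alpha I2 - lamu I3 * alpha I3"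
    by (simp add: bform_def rho_def eps_def)
  from al show "((lamu - alpha) I2 - (lamu - alpha) I3)^2 + 2 * ((lamu - alpha) I2 - (lamu - alpha) I3) =
       (2 - 2 * (lam I1 + (lam I2 + lam I3) / 2))^2 - 1"
  proof
    assume a: "alpha I1 = 1 \<and> alpha I2 = -1 \<and> alpha I3 = 0"
    then have "lamu I1 = - lamu I2" using assms(3) unfolding pe by (simp; algebra)
    moreover have "lam I1 = lamu I1" "lam I2 + lam I3 = lamu I2 + lamu I3" using lu by auto
    ultimately show ?thesis using a by (simp add: power2_eq_square field_simps; algebra)
  next
    assume a: "alpha I1 = 1 \<and> alpha I2 = 0 \<and> alpha I3 = -1"
    then have "lamu I1 = 1 - lamu I3" using assms(3) unfolding pe by (simp; algebra)
    moreover have "lam I1 = lamu I1" "lam I2 + lam I3 = lamu I2 + lamu I3" using lu by auto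
    ultimately show ?thesis using a by (simp add: power2_eq_square field_simps; algebra)
  qed
qed

context mta
begin

lemma g0_form: "in_g0 i j \<Longrightarrow> \<exists>q. Tm i j (p, 0, 0, 0) = (q, 0, 0, 0)"
  by (cases i; cases j) (auto simp: in_g0_def m_defs)

lemma gen0_sub: "gen0 S act {v0} \<subseteq> Phi ` range (\<lambda>p. (p, 0, 0, 0))"
proof -
  let ?G = "Phi ` range (\<lambda>p. (p, (0::complex poly), (0::complex poly), (0::complex poly)))"
  have "?G \<subseteq> S" by auto
  moreover have "subspace_c ?G"
    unfolding subspace_c_def
  proof (intro conjI ballI allI)
    show "0 \<in> ?G" using Phi_zero by (metis (no_types, lifting) rangeI image_eqI zero_prod_def)
  next
    fix x y assume "x \<in> ?G" "y \<in> ?G"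
    then obtain p q where "x = Phi (p, 0, 0, 0)" "y = Phi (q, 0, 0, 0)" by blast
    then have "x + y = Phi (p + q, 0, 0, 0)" by (simp add: Phi_add[symmetric])
    then show "x + y \<in> ?G" by blast
  next
    fix c x assume "x \<in> ?G"
    then obtain p where "x = Phi (p, 0, 0, 0)" by blast
    then have "c *\<^sub>C x = Phi (smult c p, 0, 0, 0)" by (simp add: Phi_qsc[symmetric])
    then show "c *\<^sub>C x \<in> ?G" by blast
  qed
  moreover have "\<forall>i j. in_g0 i j \<longrightarrow> (\<forall>x\<in>?G. act i j x \<in> ?G)"
  proof (intro allI impI ballI)
    fix i j x assume g: "in_g0 i j" and "x \<in> ?G"
    then obtain p where x: "x = Phi (p, 0, 0, 0)" by blast
    obtain q where "Tm i j (p, 0, 0, 0) = (q, 0, 0, 0)" using g0_form[OF g] by blast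
    then have "act i j x = Phi (q, 0, 0, 0)" by (simp only: x Phi_equiv)
    then show "act i j x \<in> ?G" by blast
  qed
  moreover have "v0 \<in> ?G" using Phi_v0 by (metis rangeI image_eqI)
  ultimately show ?thesis unfolding gen0_def by blast
qed

lemma v_form:
  assumes "v \<in> gen0 S act {v0}" "v \<noteq> 0" "act I2 I3 v = aa *\<^sub>C v"
  shows "\<exists>\<sigma>. \<sigma> \<noteq> 0 \<and> v = Phi ([:\<sigma>:], 0, 0, 0)"
proof -
  obtain p where v: "v = Phi (p, 0, 0, 0)" using assms(1) gen0_sub by blast
  have "act I2 I3 v = Phi (mE aa p, 0, 0, 0)" unfolding v Phi_equiv by (simp add: m_defs)
  moreover have "aa *\<^sub>C v = Phi (smult aa p, 0, 0, 0)" unfolding v Phi_qsc[symmetric] by simp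
  ultimately have "(mE aa p, (0::complex poly), (0::complex poly), (0::complex poly)) = (smult aa p, 0, 0, 0)"
    using assms(3) Phi_inj by metis
  then have "smult aa (pcompose p [:-2, 1:]) = smult aa p" by (simp add: mE_def)
  then have "pcompose p [:-2, 1:] = p" using a_nz by (simp add: poly_ext_iff)
  then have p: "p = [:poly p 0:]" by (rule periodic_const)
  have "poly p 0 \<noteq> 0"
  proof
    assume "poly p 0 = 0"
    then have "v = Phi 0" using v p by (simp add: zero_prod_def)
    then show False using assms(2) by simp
  qed
  then show ?thesis using v p by metis
qed

lemma w_ne1:
  assumes v: "v = Phi ([:\<sigma>:], 0, 0, 0)" and c: "l1 + ss / 2 \<noteq> 1"
  shows "act I2 I1 v + (1 / (2 * (1 - (l1 + ss / 2)))) *\<^sub>C ((2 * aa) *\<^sub>C act I3 I1 v + act I2 I1 (H0 act v))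
    = Phi (qsc (\<sigma> / (2 * (1 - (l1 + ss / 2)))) W0)"
proof -
  let ?V = "([:\<sigma>:], (0::complex poly), (0::complex poly), (0::complex poly))"
  let ?t = "1 / (2 * (1 - (l1 + ss / 2)))"
  have "act I2 I1 v + ?t *\<^sub>C ((2 * aa) *\<^sub>C act I3 I1 v + act I2 I1 (H0 act v)) =
     Phi (Tm I2 I1 ?V + qsc ?t (qsc (2 * aa) (Tm I3 I1 ?V) + Tm I2 I1 (Tm I2 I2 ?V - Tm I3 I3 ?V)))"
    unfolding v H0_def by (simp only: Phi_equiv Phi_diff[symmetric] Phi_qsc[symmetric] Phi_add[symmetric])
  also have "Tm I2 I1 ?V + qsc ?t (qsc (2 * aa) (Tm I3 I1 ?V) + Tm I2 I1 (Tm I2 I2 ?V - Tm I3 I3 ?V))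
      = qsc (\<sigma> / (2 * (1 - (l1 + ss / 2)))) W0"
  proof -
    have "2 * (1 - (l1 + ss / 2)) \<noteq> 0" using c by (metis eq_iff_diff_eq_0 mult_eq_0_iff zero_neq_numeral)
    then show ?thesis by (simp add: W0_eq m_defs poly_ext_iff zero_prod_def; auto simp: field_simps)
  qed
  finally show ?thesis .
qed

lemma w_eq1:
  assumes v: "v = Phi ([:\<sigma>:], 0, 0, 0)" and c: "l1 + ss / 2 = 1"
  shows "(2 * aa) *\<^sub>C act I3 I1 v + act I2 I1 (H0 act v) = Phi (qsc \<sigma> W0)"
proof -
  let ?V = "([:\<sigma>:], (0::complex poly), (0::complex poly), (0::complex poly))"
  have "(2 * aa) *\<^sub>C act I3 I1 v + act I2 I1 (H0 act v) =
     Phi (qsc (2 * aa) (Tm I3 I1 ?V) + Tm I2 I1 (Tm I2 I2 ?V - Tm I3 I3 ?V))"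
    unfolding v H0_def by (simp only: Phi_equiv Phi_diff[symmetric] Phi_qsc[symmetric] Phi_add[symmetric])
  also have "qsc (2 * aa) (Tm I3 I1 ?V) + Tm I2 I1 (Tm I2 I2 ?V - Tm I3 I3 ?V) = qsc \<sigma> W0"
    using c by (simp add: W0_eq m_defs poly_ext_iff zero_prod_def; auto simp: field_simps)
  finally show ?thesis .
qed

end

context rep
begin

lemma submodule_rep: "submodule S act N \<Longrightarrow> is_rep N act"
  using isrep unfolding is_rep_def submodule_def by blast

lemma hom_image_sub:
  assumes r: "is_rep S' act'" and h: "hom S' act' S act f"
  shows "submodule S act (f ` S')"
proof -
  have s0: "0 \<in> S'" using r by (simp add: is_rep_def subspace_c_def)
  have f0: "f 0 = 0"
  proof -
    have "f (0 + 0) = f 0 + f 0" using h s0 unfolding hom_def by blast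
    then show ?thesis by simp
  qed
  show ?thesis
    unfolding submodule_def subspace_c_def
  proof (intro conjI ballI allI)
    show "f ` S' \<subseteq> S" using h by (simp add: hom_def)
    show "0 \<in> f ` S'" using s0 f0 by (metis image_eqI)
  next
    fix x y assume "x \<in> f ` S'" "y \<in> f ` S'"
    then obtain a b where ab: "a \<in> S'" "b \<in> S'" "x = f a" "y = f b" by blast
    then have "x + y = f (a + b)" using h by (simp add: hom_def)
    moreover have "a + b \<in> S'" using r ab by (simp add: is_rep_def subspace_c_def)
    ultimately show "x + y \<in> f ` S'" by blast
  next
    fix c x assume "x \<in> f ` S'"
    then obtain a where a: "a \<in> S'" "x = f a" by blast
    then have "c *\<^sub>C x = f (c *\<^sub>C a)" using h by (simp add: hom_def)
    moreover have "c *\<^sub>C a \<in> S'" using r a by (simp add: is_rep_def subspace_c_def)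
    ultimately show "c *\<^sub>C x \<in> f ` S'" by blast
  next
    fix i j x assume "x \<in> f ` S'"
    then obtain a where a: "a \<in> S'" "x = f a" by blast
    then have "act i j x = f (act' i j a)" using h by (simp add: hom_def)
    moreover have "act' i j a \<in> S'" using r a by (simp add: is_rep_def)
    ultimately show "act i j x \<in> f ` S'" by blast
  qed
qed

end

theorem proposition22:
  fixes S :: "'v::cvs set" and act :: "idx \<Rightarrow> idx \<Rightarrow> 'v \<Rightarrow> 'v" and v0 v :: 'v
    and lam lamu alpha :: weight and zeta :: "idx \<Rightarrow> idx \<Rightarrow> complex"
  assumes Mt: "Mtilde_model lam zeta S act v0"
    and zI: "in_I zeta" and a_nz: "zeta I2 I3 \<noteq> 0"
    and atyp: "atypical lam"
    and lamu_orb: "lamu \<in> W_orbit_dot lam" and lamu_ad: "antidominant lamu"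
    and alpha_pos: "alpha \<in> pos_odd_roots" and alpha_perp: "bform (lamu + rho) alpha = 0"
    and alpha_ad: "antidominant (lamu - alpha)"
    and vM: "v \<in> gen0 S act {v0}" and v_nz: "v \<noteq> 0"
    and v_wh: "act I2 I3 v = zeta I2 I3 *\<^sub>C v"
  shows "let a = zeta I2 I3; c = chi0_z lam;
             v2 = act I2 I1 v;
             v4 = (2 * a) *\<^sub>C act I3 I1 v + act I2 I1 (H0 act v);
             w = (if c \<noteq> 1 then v2 + (1 / (2 * (1 - c))) *\<^sub>C v4 else v4);
             N = gen S act {w}
         in submodule S act N \<and> maximal_submodule S act N \<and>
            gen S act (insert v N) = S \<and>
            iso_Ltilde (lamu - alpha) zeta S act N"
  
proof -
  have isr: "is_rep S act" and v0S: "v0 \<in> S" and wg: "whitt_gen lam zeta act v0"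
    and gv0: "gen S act {v0} = S"
    and univ: "\<forall>(S'::'v set) act' u. is_rep S' act' \<and> u \<in> S' \<and> whitt_gen lam zeta act' u \<longrightarrow>
        (\<exists>f. hom S act S' act' f \<and> f v0 = u)"
    using Mt unfolding Mtilde_model_def by auto
  interpret R: rep S act by (rule rep.intro) (rule isr)
  have v0nz: "v0 \<noteq> 0"
  proof
    assume v00: "v0 = 0"
    have "{0} \<subseteq> S \<and> subspace_c {0} \<and> (\<forall>i j. in_g0 i j \<longrightarrow> (\<forall>x\<in>{0}. act i j x \<in> {0})) \<and> {v0} \<subseteq> {0}"
      using v00 by (simp add: subspace_c_def)
    then have "gen0 S act {v0} \<subseteq> {0}" unfolding gen0_def by blast
    then show False using vM v_nz by auto
  qed
  interpret M0: mt S act v0 lam zeta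
    by unfold_locales (fact isr v0S wg a_nz v0nz gv0 univ)+
  have kat: "M0.kp = (2 - 2 * (lam I1 + (lam I2 + lam I3) / 2))^2 - 2 * (2 - 2 * (lam I1 + (lam I2 + lam I3) / 2))"
    using atyp_kp[OF atyp] by (simp add: M0.kp_def)
  interpret M: mta S act v0 lam zeta
    by unfold_locales (rule kat)
  obtain \<sigma> where sg: "\<sigma> \<noteq> 0" "v = M0.Phi ([:\<sigma>:], 0, 0, 0)" using M.v_form[OF vM v_nz v_wh] by blast
  have c_eq: "chi0_z lam = lam I1 + (lam I2 + lam I3) / 2" by (simp add: chi0_z_def)
  define B where "B = (if chi0_z lam \<noteq> 1 then \<sigma> / (2 * (1 - chi0_z lam)) else \<sigma>)"
  have Bnz: "B \<noteq> 0" using sg(1) by (auto simp: B_def)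
  have w_eq: "(if chi0_z lam \<noteq> 1 then act I2 I1 v + (1 / (2 * (1 - chi0_z lam))) *\<^sub>C
        ((2 * zeta I2 I3) *\<^sub>C act I3 I1 v + act I2 I1 (H0 act v))
      else (2 * zeta I2 I3) *\<^sub>C act I3 I1 v + act I2 I1 (H0 act v)) = M0.Phi (qsc B M.W0)"
    using M.w_ne1[OF sg(2)] M.w_eq1[OF sg(2)] unfolding B_def c_eq by auto
  have N_eq: "gen S act {M0.Phi (qsc B M.W0)} = M0.Phi ` M.Z" by (rule M.gen_eq[OF Bnz])
  let ?N = "M0.Phi ` M.Z"
  let ?w = "M0.Phi (qsc B M.W0)"
  have wN: "?w \<in> ?N" using M.Z_qsc[OF M.W0_Z] by blast
  have wnz: "?w \<noteq> 0"
  proof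
    assume "?w = 0"
    then have "qsc B M.W0 = 0" using M0.Phi_inj[of "qsc B M.W0" 0] by simp
    then have "qsc (1 / B) (qsc B M.W0) = 0" by simp
    then have "M.W0 = 0" using Bnz by (simp add: qsc_qsc)
    then show False using M.W0_nz by simp
  qed
  have gen_ins: "gen S act (insert v ?N) = S"
  proof
    have "insert v ?N \<subseteq> S" using sg by auto
    then show "gen S act (insert v ?N) \<subseteq> S" using R.S_submodule by (intro R.gen_min) auto
  next
    have "insert v ?N \<subseteq> S" using sg by auto
    then have sm: "submodule S act (gen S act (insert v ?N))" by (rule R.gen_sub)
    have vin: "v \<in> gen S act (insert v ?N)" using R.gen_sup by blast
    have e1: "([:\<sigma>:], 0, 0, 0) = qsc \<sigma> (1::complex poly, 0::complex poly, 0::complex poly, 0::complex poly)"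
      by simp
    have "v = M0.Phi (qsc \<sigma> (1::complex poly, 0::complex poly, 0::complex poly, 0::complex poly))"
      by (simp only: sg(2) e1)
    also have "\<dots> = \<sigma> *\<^sub>C M0.Phi (1, 0, 0, 0)" by (rule M0.Phi_qsc)
    also have "\<dots> = \<sigma> *\<^sub>C v0" by (simp only: M0.Phi_v0)
    finally have "v = \<sigma> *\<^sub>C v0" .
    then have "v0 = (1 / \<sigma>) *\<^sub>C v" using sg(1) by (simp add: cscale_cscale cscale_one)
    then have "v0 \<in> gen S act (insert v ?N)" using sm vin by (simp add: submodule_def subspace_c_def)
    then have "gen S act {v0} \<subseteq> gen S act (insert v ?N)" using sm by (intro R.gen_min) auto
    then show "S \<subseteq> gen S act (insert v ?N)" using gv0 by simp
  qed
  obtain wt1 wt2 wt3 where wts: "(lamu - alpha) I1 = lam I1 - 1"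
    "(lamu - alpha) I2 + (lamu - alpha) I3 = lam I2 + lam I3 + 1"
    "((lamu - alpha) I2 - (lamu - alpha) I3)^2 + 2 * ((lamu - alpha) I2 - (lamu - alpha) I3) =
       (2 - 2 * (lam I1 + (lam I2 + lam I3) / 2))^2 - 1"
    using weights[OF lamu_orb alpha_pos alpha_perp] by blast
  have wwg: "whitt_gen (lamu - alpha) zeta act ?w"
    by (rule M.whitt_W0) (use wts in auto)
  have iso: "iso_Ltilde (lamu - alpha) zeta S act ?N"
    unfolding iso_Ltilde_def
  proof (intro conjI allI impI)
    show "simple_mod S act ?N" by (rule M.simple)
    show "\<exists>u\<in>?N. u \<noteq> 0 \<and> whitt_gen (lamu - alpha) zeta act u"
      by (rule bexI[of _ ?w]) (rule conjI[OF wnz wwg], rule wN)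
  next
    fix S' :: "'v set" and act' :: "idx \<Rightarrow> idx \<Rightarrow> 'v \<Rightarrow> 'v" and v' :: 'v
    assume mm: "Mtilde_model (lamu - alpha) zeta S' act' v'"
    note mm' = mm[unfolded Mtilde_model_def]
    have r': "is_rep S' act'" using mm' by (rule conjunct1)
    note un' = mm'[THEN conjunct2, THEN conjunct2, THEN conjunct2, THEN conjunct2]
    note v'S = mm'[THEN conjunct2, THEN conjunct1]
    have rN: "is_rep ?N act" using M.PZ_sub by (rule R.submodule_rep)
    have pre: "is_rep ?N act \<and> ?w \<in> ?N \<and> whitt_gen (lamu - alpha) zeta act ?w" using rN wN wwg by blast
    obtain f where f: "hom S' act' ?N act f" "f v' = ?w" using un'[rule_format, OF pre] by blast
    have fS: "f ` S' \<subseteq> ?N" using f(1) by (simp add: hom_def)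
    have NS: "?N \<subseteq> S" using M.PZ_sub by (simp add: submodule_def)
    have fS2: "f ` S' \<subseteq> S" using fS NS by (rule order_trans)
    have hS: "hom S' act' S act f" using f(1) fS2 unfolding hom_def by simp
    have sm: "submodule S act (f ` S')" by (rule R.hom_image_sub[OF r' hS])
    have "?w \<in> f ` S'" by (rule image_eqI[where f=f, OF f(2)[symmetric] v'S])
    then have "gen S act {?w} \<subseteq> f ` S'" by (intro R.gen_min[OF sm]) simp
    then have "?N \<subseteq> f ` S'" using N_eq by simp
    then have "f ` S' = ?N" using fS by (rule antisym[rotated])
    then show "\<exists>f. hom S' act' ?N act f \<and> f ` S' = ?N" using f(1) by blast
  qed
  show ?thesis
    unfolding Let_def w_eq N_eq
    by (intro conjI) (rule M.PZ_sub, rule M.maximal, rule gen_ins, rule iso)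
qed

end
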